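(* Let $Y$ be a (discrete) groupoid and $\Lambda\subseteq Y$ a subcategory with $Y^0\subseteq\Lambda$. For $t\in Y$, $W_t\in\mathcal W_0$ if and only if there is a finite set $F\subseteq\mathcal Z_\Lambda$ such that (1) for every $\zeta\in F$, $\varphi_\zeta(\beta)=t\beta$ for all $\beta\in A(\zeta)$; and (2) $\{\beta\in\Lambda: r(\beta)=s(t),\ t\beta\in\Lambda\}=\bigcup_{\zeta\in F}A(\zeta)$.
   Context: $\Lambda$ is a left cancellative small category (being a subcategory of a groupoid), composition $\alpha\beta$ defined when $s(\alpha)=r(\beta)$. On $\ell^2(\Lambda)$ with standard basis $\{e_\alpha\}$, for $t\in Y$ let $W_t e_\alpha=e_{t\alpha}$ if $s(t)=r(\alpha)$ and $t\alpha\in\Lambda$, and $W_te_\alpha=0$ otherwise (so $W_t=J^*L_tJ$ with $L$ the left regular representation of $Y$ and $J:\ell^2(\Lambda)\to\ell^2(Y)$ the inclusion). $\mathcal W_0$ is the C*-algebra generated by $\{W_\alpha:\alpha\in\Lambda\}$. For $\alpha\in\Lambda$, $\tau^\alpha(\beta)=\alpha\beta$ on $\{\beta\in\Lambda:r(\beta)=s(\alpha)\}$ and $\sigma^\alpha$ is its inverse on $\alpha\Lambda$. A zigzag is $\zeta=(\alpha_1,\beta_1,\dots,\alpha_n,\beta_n)$, $\alpha_i,\beta_i\in\Lambda$, with $r(\alpha_i)=r(\beta_i)$ and $s(\alpha_{i+1})=s(\beta_i)$; $\mathcal Z_\Lambda$ the set of zigzags; $\varphi_\zeta=\sigma^{\alpha_1}\circ\tau^{\beta_1}\circ\cdots\circ\sigma^{\alpha_n}\circ\tau^{\beta_n}$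 (composition of partial maps) with domain $A(\zeta)$. *)

theory Defs
  imports "HOL-Analysis.Analysis"
begin

text \<open>A (discrete) groupoid on the set Y of arrows (in an ambient type 'a):
  range/source maps r, s, a total multiplication function m (only meaningful on
  composable pairs, i.e. s x = r y), and inversion i. The unit space is r ` Y.\<close>

definition groupoid ::
  "'a set \<Rightarrow> ('a \<Rightarrow> 'a) \<Rightarrow> ('a \<Rightarrow> 'a) \<Rightarrow> ('a \<Rightarrow> 'a \<Rightarrow> 'a) \<Rightarrow> ('a \<Rightarrow> 'a) \<Rightarrow> bool" where
  "groupoid Y r s m i \<longleftrightarrow>
     (\<forall>x\<in>Y. r x \<in> Y \<and> s x \<in> Y \<and> r (r x) = r x \<and> s (r x) = r x
            \<and> r (s x) = s x \<and> s (s x) = s x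
            \<and> m (r x) x = x \<and> m x (s x) = x
            \<and> i x \<in> Y \<and> r (i x) = s x \<and> s (i x) = r x
            \<and> m x (i x) = r x \<and> m (i x) x = s x) \<and>
     (\<forall>x\<in>Y. \<forall>y\<in>Y. s x = r y \<longrightarrow> m x y \<in> Y \<and> r (m x y) = r x \<and> s (m x y) = s y) \<and>
     (\<forall>x\<in>Y. \<forall>y\<in>Y. \<forall>z\<in>Y. s x = r y \<longrightarrow> s y = r z \<longrightarrow> m (m x y) z = m x (m y z))"

definition subcategory ::
  "'a set \<Rightarrow> ('a \<Rightarrow> 'a) \<Rightarrow> ('a \<Rightarrow> 'a) \<Rightarrow> ('a \<Rightarrow> 'a \<Rightarrow> 'a) \<Rightarrow> 'a set \<Rightarrow> bool" where
  "subcategory Y r s m \<Lambda> \<longleftrightarrow> \<Lambda> \<subseteq> Y \<and>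
     (\<forall>x\<in>\<Lambda>. r x \<in> \<Lambda> \<and> s x \<in> \<Lambda>) \<and>
     (\<forall>x\<in>\<Lambda>. \<forall>y\<in>\<Lambda>. s x = r y \<longrightarrow> m x y \<in> \<Lambda>)"

definition l2 :: "'a set \<Rightarrow> ('a \<Rightarrow> complex) set" where
  "l2 \<Lambda> = {f. (\<forall>x. x \<notin> \<Lambda> \<longrightarrow> f x = 0) \<and> (\<lambda>x. (cmod (f x))\<^sup>2) summable_on UNIV}"

definition l2inner :: "('a \<Rightarrow> complex) \<Rightarrow> ('a \<Rightarrow> complex) \<Rightarrow> complex" where
  "l2inner f g = (\<Sum>\<^sub>\<infinity>x. cnj (f x) * g x)"

definition l2norm :: "('a \<Rightarrow> complex) \<Rightarrow> real" where
  "l2norm f = sqrt (\<Sum>\<^sub>\<infinity>x. (cmod (f x))\<^sup>2)"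

type_synonym 'a op = "('a \<Rightarrow> complex) \<Rightarrow> ('a \<Rightarrow> complex)"

text \<open>W_t = J^* L_t J: (W_t f)(g) = f(t^{-1} g) if g in Lambda, r g = r t and t^{-1} g in Lambda,
  and 0 otherwise; on basis vectors W_t e_a = e_{t a} if s t = r a and t a in Lambda, else 0.\<close>

definition Wop :: "('a \<Rightarrow> 'a) \<Rightarrow> ('a \<Rightarrow> 'a \<Rightarrow> 'a) \<Rightarrow> ('a \<Rightarrow> 'a) \<Rightarrow> 'a set \<Rightarrow> 'a \<Rightarrow> 'a op" where
  "Wop r m i \<Lambda> t f = (\<lambda>g. if g \<in> \<Lambda> \<and> r g = r t \<and> m (i t) g \<in> \<Lambda> then f (m (i t) g) else 0)"

text \<open>The C*-algebra generated by a set G of operators on l2(Lambda): the smallest set of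
  operators containing G and closed under sums, scalar multiples, products, adjoints and
  operator-norm limits (operators being identified when they agree on l2(Lambda)).\<close>

inductive_set Cstar_gen :: "'a set \<Rightarrow> 'a op set \<Rightarrow> 'a op set" for \<Lambda> G where
  gen: "T \<in> G \<Longrightarrow> T \<in> Cstar_gen \<Lambda> G"
| add: "T \<in> Cstar_gen \<Lambda> G \<Longrightarrow> U \<in> Cstar_gen \<Lambda> G \<Longrightarrow> (\<lambda>f x. T f x + U f x) \<in> Cstar_gen \<Lambda> G"
| scale: "T \<in> Cstar_gen \<Lambda> G \<Longrightarrow> (\<lambda>f x. c * T f x) \<in> Cstar_gen \<Lambda> G"
| mult: "T \<in> Cstar_gen \<Lambda> G \<Longrightarrow> U \<in> Cstar_gen \<Lambda> G \<Longrightarrow> (\<lambda>f. T (U f)) \<in> Cstar_gen \<Lambda> G"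
| adj: "T \<in> Cstar_gen \<Lambda> G \<Longrightarrow> (\<forall>g\<in>l2 \<Lambda>. T' g \<in> l2 \<Lambda>) \<Longrightarrow>
         (\<forall>f\<in>l2 \<Lambda>. \<forall>g\<in>l2 \<Lambda>. l2inner (T f) g = l2inner f (T' g)) \<Longrightarrow> T' \<in> Cstar_gen \<Lambda> G"
| lim: "(\<And>n::nat. Ts n \<in> Cstar_gen \<Lambda> G) \<Longrightarrow> (\<forall>f\<in>l2 \<Lambda>. T f \<in> l2 \<Lambda>) \<Longrightarrow>
         (\<forall>\<epsilon>>0. \<exists>N. \<forall>n\<ge>N. \<forall>f\<in>l2 \<Lambda>. l2norm (\<lambda>x. Ts n f x - T f x) \<le> \<epsilon> * l2norm f) \<Longrightarrow>
         T \<in> Cstar_gen \<Lambda> G"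

definition W0 :: "('a \<Rightarrow> 'a) \<Rightarrow> ('a \<Rightarrow> 'a \<Rightarrow> 'a) \<Rightarrow> ('a \<Rightarrow> 'a) \<Rightarrow> 'a set \<Rightarrow> 'a op set" where
  "W0 r m i \<Lambda> = Cstar_gen \<Lambda> (Wop r m i \<Lambda> ` \<Lambda>)"

definition tau :: "('a \<Rightarrow> 'a) \<Rightarrow> ('a \<Rightarrow> 'a) \<Rightarrow> ('a \<Rightarrow> 'a \<Rightarrow> 'a) \<Rightarrow> 'a set \<Rightarrow> 'a \<Rightarrow> 'a \<Rightarrow> 'a option" where
  "tau r s m \<Lambda> b c = (if c \<in> \<Lambda> \<and> r c = s b then Some (m b c) else None)"

definition sigma :: "('a \<Rightarrow> 'a) \<Rightarrow> ('a \<Rightarrow> 'a) \<Rightarrow> ('a \<Rightarrow> 'a \<Rightarrow> 'a) \<Rightarrow> 'a set \<Rightarrow> 'a \<Rightarrow> 'a \<Rightarrow> 'a option" where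
  "sigma r s m \<Lambda> a y = (if \<exists>c\<in>\<Lambda>. r c = s a \<and> m a c = y
      then Some (THE c. c \<in> \<Lambda> \<and> r c = s a \<and> m a c = y) else None)"

text \<open>A zigzag (a1,b1,...,an,bn), n >= 1, is the list [(a1,b1),...,(an,bn)].\<close>
definition zigzags :: "('a \<Rightarrow> 'a) \<Rightarrow> ('a \<Rightarrow> 'a) \<Rightarrow> 'a set \<Rightarrow> ('a \<times> 'a) list set" where
  "zigzags r s \<Lambda> = {z. z \<noteq> [] \<and> (\<forall>k<length z. fst (z!k) \<in> \<Lambda> \<and> snd (z!k) \<in> \<Lambda>
        \<and> r (fst (z!k)) = r (snd (z!k))
        \<and> (Suc k < length z \<longrightarrow> s (fst (z!Suc k)) = s (snd (z!k))))}"

text \<open>phi_z = sigma^{a1} o tau^{b1} o ... o sigma^{an} o tau^{bn} (partial maps).\<close>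
fun zzmap :: "('a \<Rightarrow> 'a) \<Rightarrow> ('a \<Rightarrow> 'a) \<Rightarrow> ('a \<Rightarrow> 'a \<Rightarrow> 'a) \<Rightarrow> 'a set \<Rightarrow> ('a \<times> 'a) list \<Rightarrow> 'a \<Rightarrow> 'a option" where
  "zzmap r s m \<Lambda> [] x = Some x"
| "zzmap r s m \<Lambda> ((a, b) # z) x =
     Option.bind (zzmap r s m \<Lambda> z x) (\<lambda>y. Option.bind (tau r s m \<Lambda> b y) (sigma r s m \<Lambda> a))"

definition zzdom :: "('a \<Rightarrow> 'a) \<Rightarrow> ('a \<Rightarrow> 'a) \<Rightarrow> ('a \<Rightarrow> 'a \<Rightarrow> 'a) \<Rightarrow> 'a set \<Rightarrow> ('a \<times> 'a) list \<Rightarrow> 'a set" where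
  "zzdom r s m \<Lambda> z = {x. zzmap r s m \<Lambda> z x \<noteq> None}"

end

theory Submission
  imports Defs
begin


lemma l2D: "f \<in> l2 \<Lambda> \<Longrightarrow> (\<lambda>x. (cmod (f x))\<^sup>2) summable_on UNIV"
  "f \<in> l2 \<Lambda> \<Longrightarrow> x \<notin> \<Lambda> \<Longrightarrow> f x = 0"
  by (auto simp: l2_def)

lemma l2norm_nonneg: "l2norm f \<ge> 0"
  unfolding l2norm_def by (simp add: infsum_nonneg)

lemma l2norm_sq: "(l2norm f)\<^sup>2 = (\<Sum>\<^sub>\<infinity>x. (cmod (f x))\<^sup>2)"
  unfolding l2norm_def by (simp add: infsum_nonneg)

lemma l2_sum_le:
  assumes "f \<in> l2 \<Lambda>" "finite F"
  shows "(\<Sum>x\<in>F. (cmod (f x))\<^sup>2) \<le> (l2norm f)\<^sup>2"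
proof -
  have "(\<Sum>x\<in>F. (cmod (f x))\<^sup>2) = (\<Sum>\<^sub>\<infinity>x\<in>F. (cmod (f x))\<^sup>2)" using assms by simp
  also have "\<dots> \<le> (\<Sum>\<^sub>\<infinity>x. (cmod (f x))\<^sup>2)"
    by (rule infsum_mono_neutral) (use assms l2D in auto)
  finally show ?thesis by (simp add: l2norm_sq)
qed

lemma L2_le_l2norm:
  assumes "f \<in> l2 \<Lambda>"
  shows "L2_set (\<lambda>x. cmod (f x)) F \<le> l2norm f"
proof (cases "finite F")
  case True
  have "L2_set (\<lambda>x. cmod (f x)) F = sqrt (\<Sum>x\<in>F. (cmod (f x))\<^sup>2)" by (simp add: L2_set_def)
  also have "\<dots> \<le> sqrt ((l2norm f)\<^sup>2)" by (rule real_sqrt_le_mono[OF l2_sum_le[OF assms True]])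
  also have "\<dots> = l2norm f" by (simp add: abs_of_nonneg l2norm_nonneg)
  finally show ?thesis .
qed (simp add: l2norm_nonneg)

lemma l2_bound:
  assumes "\<And>x. x \<notin> \<Lambda> \<Longrightarrow> f x = 0"
    and "\<And>F. finite F \<Longrightarrow> L2_set (\<lambda>x. cmod (f x)) F \<le> B"
  shows "f \<in> l2 \<Lambda>" "l2norm f \<le> B"
proof -
  have B0: "0 \<le> B" using assms(2)[of "{}"] by simp
  have fs: "\<And>F. finite F \<Longrightarrow> (\<Sum>x\<in>F. (cmod (f x))\<^sup>2) \<le> B\<^sup>2"
  proof -
    fix F :: "'a set" assume "finite F"
    have "sqrt (\<Sum>x\<in>F. (cmod (f x))\<^sup>2) \<le> B" using assms(2)[OF \<open>finite F\<close>] by (simp add: L2_set_def)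
    thus "(\<Sum>x\<in>F. (cmod (f x))\<^sup>2) \<le> B\<^sup>2"
      by (rule sqrt_le_D)
  qed
  have sm: "(\<lambda>x. (cmod (f x))\<^sup>2) summable_on UNIV"
    by (rule nonneg_bdd_above_summable_on) (use fs in \<open>auto simp: bdd_above_def\<close>)
  thus "f \<in> l2 \<Lambda>" using assms(1) by (auto simp: l2_def)
  have "(\<Sum>\<^sub>\<infinity>x. (cmod (f x))\<^sup>2) \<le> B\<^sup>2" by (rule infsum_le_finite_sums[OF sm]) (use fs in auto)
  then have "sqrt (\<Sum>\<^sub>\<infinity>x. (cmod (f x))\<^sup>2) \<le> sqrt (B\<^sup>2)" by (rule real_sqrt_le_mono)
  thus "l2norm f \<le> B" using B0 by (simp add: l2norm_def abs_of_nonneg)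
qed

lemma l2_add:
  assumes "f \<in> l2 \<Lambda>" "g \<in> l2 \<Lambda>"
  shows "(\<lambda>x. f x + g x) \<in> l2 \<Lambda>" "l2norm (\<lambda>x. f x + g x) \<le> l2norm f + l2norm g"
proof -
  have *: "L2_set (\<lambda>x. cmod (f x + g x)) F \<le> l2norm f + l2norm g" if "finite F" for F
  proof -
    have "L2_set (\<lambda>x. cmod (f x + g x)) F \<le> L2_set (\<lambda>x. cmod (f x) + cmod (g x)) F"
      by (rule L2_set_mono) (auto simp: norm_triangle_ineq)
    also have "\<dots> \<le> L2_set (\<lambda>x. cmod (f x)) F + L2_set (\<lambda>x. cmod (g x)) F"
      by (rule L2_set_triangle_ineq)
    also have "\<dots> \<le> l2norm f + l2norm g" using L2_le_l2norm assms by (metis add_mono)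
    finally show ?thesis .
  qed
  have z: "\<And>x. x \<notin> \<Lambda> \<Longrightarrow> f x + g x = 0" by (simp add: l2D(2)[OF assms(1)] l2D(2)[OF assms(2)])
  show "(\<lambda>x. f x + g x) \<in> l2 \<Lambda>" "l2norm (\<lambda>x. f x + g x) \<le> l2norm f + l2norm g"
    using l2_bound[of \<Lambda> "\<lambda>x. f x + g x", OF z *] by auto
qed

lemma l2_scale:
  assumes "f \<in> l2 \<Lambda>"
  shows "(\<lambda>x. c * f x) \<in> l2 \<Lambda>" "l2norm (\<lambda>x. c * f x) = cmod c * l2norm f"
proof -
  have e: "(\<lambda>x. (cmod (c * f x))\<^sup>2) = (\<lambda>x. (cmod (f x))\<^sup>2 * (cmod c)\<^sup>2)"
    by (auto simp: norm_mult power_mult_distrib)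
  have "(\<lambda>x. (cmod (f x))\<^sup>2 * (cmod c)\<^sup>2) summable_on UNIV"
    by (rule summable_on_cmult_left) (rule l2D(1)[OF assms])
  then show "(\<lambda>x. c * f x) \<in> l2 \<Lambda>" using assms unfolding l2_def by (simp add: e)
  have "(\<Sum>\<^sub>\<infinity>x. (cmod (c * f x))\<^sup>2) = (\<Sum>\<^sub>\<infinity>x. (cmod (f x))\<^sup>2) * (cmod c)\<^sup>2"
    unfolding e by (rule infsum_cmult_left) (use assms l2D in auto)
  thus "l2norm (\<lambda>x. c * f x) = cmod c * l2norm f"
    unfolding l2norm_def by (simp add: real_sqrt_mult)
qed

lemma l2_diff:
  assumes "f \<in> l2 \<Lambda>" "g \<in> l2 \<Lambda>"
  shows "(\<lambda>x. f x - g x) \<in> l2 \<Lambda>" "l2norm (\<lambda>x. f x - g x) \<le> l2norm f + l2norm g"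
proof -
  have e: "(\<lambda>x. f x - g x) = (\<lambda>x. f x + (\<lambda>x. (-1) * g x) x)" by auto
  have g': "(\<lambda>x. (-1) * g x) \<in> l2 \<Lambda>" "l2norm (\<lambda>x. (-1) * g x) = l2norm g"
    using l2_scale[OF assms(2), of "-1"] by auto
  show "(\<lambda>x. f x - g x) \<in> l2 \<Lambda>" "l2norm (\<lambda>x. f x - g x) \<le> l2norm f + l2norm g"
    unfolding e using l2_add[OF assms(1) g'(1)] g'(2) by auto
qed

lemma l2norm_minus_commute: "l2norm (\<lambda>x. f x - g x) = l2norm (\<lambda>x. g x - f x)"
  unfolding l2norm_def by (simp add: norm_minus_commute)

lemma l2_tri:
  assumes "f \<in> l2 \<Lambda>" "g \<in> l2 \<Lambda>" "h \<in> l2 \<Lambda>"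
  shows "l2norm (\<lambda>x. f x - h x) \<le> l2norm (\<lambda>x. f x - g x) + l2norm (\<lambda>x. g x - h x)"
proof -
  have "(\<lambda>x. f x - h x) = (\<lambda>x. (\<lambda>x. f x - g x) x + (\<lambda>x. g x - h x) x)" by auto
  thus ?thesis using l2_add[OF l2_diff(1)[OF assms(1,2)] l2_diff(1)[OF assms(2,3)]] by simp
qed

lemma l2_point:
  assumes "f \<in> l2 \<Lambda>" shows "cmod (f x) \<le> l2norm f"
proof -
  have "cmod (f x) = L2_set (\<lambda>x. cmod (f x)) {x}" by (simp add: L2_set_def)
  thus ?thesis using L2_le_l2norm[OF assms] by metis
qed

lemma l2_zero: "(\<lambda>x. 0) \<in> l2 \<Lambda>" "l2norm (\<lambda>x. 0) = 0"
  by (auto simp: l2_def l2norm_def)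

definition ebase :: "'a \<Rightarrow> 'a \<Rightarrow> complex" where "ebase b = (\<lambda>x. if x = b then 1 else 0)"

lemma ebase_l2: assumes "b \<in> \<Lambda>" shows "ebase b \<in> l2 \<Lambda>" "l2norm (ebase b) = 1"
proof -
  have *: "L2_set (\<lambda>x. cmod (ebase b x)) F \<le> 1" if "finite F" for F
  proof -
    have "L2_set (\<lambda>x. cmod (ebase b x)) F \<le> (\<Sum>x\<in>F. \<bar>cmod (ebase b x)\<bar>)" by (rule L2_set_le_sum_abs)
    also have "\<dots> = (\<Sum>x\<in>F\<inter>{b}. 1)" using that by (intro sum.mono_neutral_cong_right) (auto simp: ebase_def)
    also have "\<dots> \<le> 1" by (cases "b \<in> F") auto
    finally show ?thesis .
  qed
  have z: "\<And>x. x \<notin> \<Lambda> \<Longrightarrow> ebase b x = 0" using assms by (auto simp: ebase_def)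
  show l: "ebase b \<in> l2 \<Lambda>" using l2_bound[of \<Lambda> "ebase b", OF z *] by auto
  have "l2norm (ebase b) \<le> 1" using l2_bound[of \<Lambda> "ebase b", OF z *] by auto
  moreover have "cmod (ebase b b) \<le> l2norm (ebase b)" by (rule l2_point[OF l])
  ultimately show "l2norm (ebase b) = 1" by (simp add: ebase_def)
qed

lemma infsum_diff':
  fixes f g :: "'a \<Rightarrow> complex"
  assumes "f summable_on A" "g summable_on A"
  shows "infsum (\<lambda>x. f x - g x) A = infsum f A - infsum g A"
proof -
  have "infsum (\<lambda>x. f x + (- g x)) A = infsum f A + infsum (\<lambda>x. - g x) A"
    by (rule infsum_add[OF assms(1)]) (rule summable_on_uminus[THEN iffD2, OF assms(2)])
  thus ?thesis by (simp add: infsum_uminus)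
qed

lemma l2inner_abs:
  assumes "f \<in> l2 \<Lambda>" "g \<in> l2 \<Lambda>"
  shows "(\<lambda>x. norm (cnj (f x) * g x)) summable_on UNIV"
    "(\<Sum>\<^sub>\<infinity>x. norm (cnj (f x) * g x)) \<le> l2norm f * l2norm g"
proof -
  have fs: "(\<Sum>x\<in>F. norm (cnj (f x) * g x)) \<le> l2norm f * l2norm g" if "finite F" for F
  proof -
    have "(\<Sum>x\<in>F. norm (cnj (f x) * g x)) = (\<Sum>x\<in>F. \<bar>cmod (f x)\<bar> * \<bar>cmod (g x)\<bar>)" by (simp add: norm_mult)
    also have "\<dots> \<le> L2_set (\<lambda>x. cmod (f x)) F * L2_set (\<lambda>x. cmod (g x)) F" by (rule L2_set_mult_ineq)
    also have "\<dots> \<le> l2norm f * l2norm g"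
      by (intro mult_mono L2_le_l2norm[OF assms(1)] L2_le_l2norm[OF assms(2)] l2norm_nonneg L2_set_nonneg)
    finally show ?thesis .
  qed
  show sm: "(\<lambda>x. norm (cnj (f x) * g x)) summable_on UNIV"
    by (rule nonneg_bdd_above_summable_on) (use fs in \<open>auto simp: bdd_above_def\<close>)
  show "(\<Sum>\<^sub>\<infinity>x. norm (cnj (f x) * g x)) \<le> l2norm f * l2norm g"
    by (rule infsum_le_finite_sums[OF sm]) (use fs in auto)
qed

lemma l2inner_summable:
  assumes "f \<in> l2 \<Lambda>" "g \<in> l2 \<Lambda>"
  shows "(\<lambda>x. cnj (f x) * g x) summable_on UNIV"
  by (rule abs_summable_summable[OF l2inner_abs(1)[OF assms]])

lemma cauchy_schwarz:
  assumes "f \<in> l2 \<Lambda>" "g \<in> l2 \<Lambda>"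
  shows "cmod (l2inner f g) \<le> l2norm f * l2norm g"
  unfolding l2inner_def
  by (rule order_trans[OF norm_infsum_bound l2inner_abs(2)[OF assms]]) (rule l2inner_abs(1)[OF assms])

lemma l2inner_diff_right:
  assumes "f \<in> l2 \<Lambda>" "g \<in> l2 \<Lambda>" "h \<in> l2 \<Lambda>"
  shows "l2inner f (\<lambda>x. g x - h x) = l2inner f g - l2inner f h"
  unfolding l2inner_def
  using infsum_diff'[OF l2inner_summable[OF assms(1,2)] l2inner_summable[OF assms(1,3)]]
  by (simp add: right_diff_distrib)

lemma l2inner_diff_left:
  assumes "f \<in> l2 \<Lambda>" "g \<in> l2 \<Lambda>" "h \<in> l2 \<Lambda>"
  shows "l2inner (\<lambda>x. g x - h x) f = l2inner g f - l2inner h f"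
  unfolding l2inner_def
  using infsum_diff'[OF l2inner_summable[OF assms(2,1)] l2inner_summable[OF assms(3,1)]]
  by (simp add: left_diff_distrib)

lemma l2inner_add_left:
  assumes "f \<in> l2 \<Lambda>" "g \<in> l2 \<Lambda>" "h \<in> l2 \<Lambda>"
  shows "l2inner (\<lambda>x. g x + h x) f = l2inner g f + l2inner h f"
  unfolding l2inner_def
  using infsum_add[OF l2inner_summable[OF assms(2,1)] l2inner_summable[OF assms(3,1)]]
  by (simp add: distrib_right)

lemma l2inner_add_right:
  assumes "f \<in> l2 \<Lambda>" "g \<in> l2 \<Lambda>" "h \<in> l2 \<Lambda>"
  shows "l2inner f (\<lambda>x. g x + h x) = l2inner f g + l2inner f h"
  unfolding l2inner_def
  using infsum_add[OF l2inner_summable[OF assms(1,2)] l2inner_summable[OF assms(1,3)]]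
  by (simp add: distrib_left)

lemma l2inner_scale_left:
  "l2inner (\<lambda>x. c * g x) f = cnj c * l2inner g f"
  unfolding l2inner_def
  using infsum_cmult_right'[of "cnj c" "\<lambda>x. cnj (g x) * f x" UNIV]
  by (simp add: mult.assoc)

lemma l2inner_scale_right:
  "l2inner f (\<lambda>x. c * g x) = c * l2inner f g"
  unfolding l2inner_def
  using infsum_cmult_right'[of c "\<lambda>x. cnj (f x) * g x" UNIV]
  by (simp add: mult.assoc mult.left_commute)

lemma l2inner_self:
  assumes "f \<in> l2 \<Lambda>"
  shows "l2inner f f = complex_of_real ((l2norm f)\<^sup>2)"
proof -
  have e: "(\<lambda>x. cnj (f x) * f x) = (\<lambda>x. complex_of_real ((cmod (f x))\<^sup>2))"
    by (rule ext, subst complex_norm_square, rule mult.commute)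
  have "((\<lambda>x. (cmod (f x))\<^sup>2) has_sum (\<Sum>\<^sub>\<infinity>x. (cmod (f x))\<^sup>2)) UNIV"
    using l2D(1)[OF assms] by (simp add: has_sum_infsum)
  from has_sum_of_real[OF this] have "((\<lambda>x. complex_of_real ((cmod (f x))\<^sup>2)) has_sum complex_of_real (\<Sum>\<^sub>\<infinity>x. (cmod (f x))\<^sup>2)) UNIV" .
  then show ?thesis unfolding l2inner_def e l2norm_sq by (rule infsumI)
qed



definition pop :: "('a \<Rightarrow> 'a option) \<Rightarrow> 'a op" where
  "pop \<phi> f x = (case \<phi> x of Some y \<Rightarrow> f y | None \<Rightarrow> 0)"

lemma pop_l2:
  assumes inj: "\<And>x x' y. \<phi> x = Some y \<Longrightarrow> \<phi> x' = Some y \<Longrightarrow> x = x'"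
    and dom: "\<And>x y. \<phi> x = Some y \<Longrightarrow> x \<in> \<Lambda>"
    and f: "f \<in> l2 \<Lambda>"
  shows "pop \<phi> f \<in> l2 \<Lambda>" "l2norm (pop \<phi> f) \<le> l2norm f"
proof -
  define D where "D = {x. \<phi> x \<noteq> None}"
  define h where "h x = the (\<phi> x)" for x
  have injh: "inj_on h A" if "A \<subseteq> D" for A
    using that inj unfolding inj_on_def D_def h_def by fastforce
  have z: "\<And>x. x \<notin> \<Lambda> \<Longrightarrow> pop \<phi> f x = 0"
    using dom by (auto simp: pop_def split: option.split)
  have *: "L2_set (\<lambda>x. cmod (pop \<phi> f x)) F \<le> l2norm f" if "finite F" for F
  proof -
    have "(\<Sum>x\<in>F. (cmod (pop \<phi> f x))\<^sup>2) = (\<Sum>x\<in>F\<inter>D. (cmod (f (h x)))\<^sup>2)"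
      using that by (intro sum.mono_neutral_cong_right) (auto simp: pop_def D_def h_def split: option.split)
    also have "\<dots> = (\<Sum>y\<in>h`(F\<inter>D). (cmod (f y))\<^sup>2)"
      using sum.reindex[OF injh[of "F\<inter>D"], of "\<lambda>y. (cmod (f y))\<^sup>2"] by (simp add: o_def)
    also have "\<dots> \<le> (l2norm f)\<^sup>2" by (rule l2_sum_le[OF f]) (use that in simp)
    finally have "sqrt (\<Sum>x\<in>F. (cmod (pop \<phi> f x))\<^sup>2) \<le> sqrt ((l2norm f)\<^sup>2)" by (rule real_sqrt_le_mono)
    thus ?thesis by (simp add: L2_set_def abs_of_nonneg l2norm_nonneg)
  qed
  show "pop \<phi> f \<in> l2 \<Lambda>" "l2norm (pop \<phi> f) \<le> l2norm f" using l2_bound[OF z *] by auto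
qed

lemma pop_adj:
  assumes inv: "\<And>x y. \<phi> x = Some y \<longleftrightarrow> \<psi> y = Some x"
  shows "l2inner (pop \<phi> f) g = l2inner f (pop \<psi> g)"
proof -
  have i1: "\<And>x y. \<phi> x = Some y \<Longrightarrow> \<psi> y = Some x" and i2: "\<And>x y. \<psi> y = Some x \<Longrightarrow> \<phi> x = Some y"
    using inv by auto
  define D where "D = {x. \<phi> x \<noteq> None}"
  define R where "R = {y. \<psi> y \<noteq> None}"
  have "l2inner (pop \<phi> f) g = (\<Sum>\<^sub>\<infinity>x\<in>D. cnj (f (the (\<phi> x))) * g x)"
    unfolding l2inner_def by (rule infsum_cong_neutral) (auto simp: pop_def D_def split: option.split)
  also have "\<dots> = (\<Sum>\<^sub>\<infinity>y\<in>R. cnj (f y) * g (the (\<psi> y)))"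
    by (rule infsum_reindex_bij_witness[where i="\<lambda>y. the (\<psi> y)" and j="\<lambda>x. the (\<phi> x)"])
       (fastforce simp: D_def R_def dest: i1 i2)+
  also have "\<dots> = l2inner f (pop \<psi> g)"
    unfolding l2inner_def by (rule infsum_cong_neutral) (auto simp: pop_def R_def split: option.split)
  finally show ?thesis .
qed



locale gctx =
  fixes Y \<Lambda> :: "'a set" and r s i :: "'a \<Rightarrow> 'a" and m :: "'a \<Rightarrow> 'a \<Rightarrow> 'a"
  assumes G: "groupoid Y r s m i" and SC: "subcategory Y r s m \<Lambda>" and U: "r ` Y \<subseteq> \<Lambda>"
begin

lemma gY: "x \<in> Y \<Longrightarrow> r x \<in> Y" "x \<in> Y \<Longrightarrow> s x \<in> Y" "x \<in> Y \<Longrightarrow> i x \<in> Y"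
  using G unfolding groupoid_def by auto
lemma gid: "x \<in> Y \<Longrightarrow> r (r x) = r x" "x \<in> Y \<Longrightarrow> s (r x) = r x"
  "x \<in> Y \<Longrightarrow> r (s x) = s x" "x \<in> Y \<Longrightarrow> s (s x) = s x"
  "x \<in> Y \<Longrightarrow> r (i x) = s x" "x \<in> Y \<Longrightarrow> s (i x) = r x"
  using G unfolding groupoid_def by auto
lemma gunit: "x \<in> Y \<Longrightarrow> m (r x) x = x" "x \<in> Y \<Longrightarrow> m x (s x) = x"
  "x \<in> Y \<Longrightarrow> m x (i x) = r x" "x \<in> Y \<Longrightarrow> m (i x) x = s x"
  using G unfolding groupoid_def by auto
lemma gm: "x \<in> Y \<Longrightarrow> y \<in> Y \<Longrightarrow> s x = r y \<Longrightarrow> m x y \<in> Y"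
  "x \<in> Y \<Longrightarrow> y \<in> Y \<Longrightarrow> s x = r y \<Longrightarrow> r (m x y) = r x"
  "x \<in> Y \<Longrightarrow> y \<in> Y \<Longrightarrow> s x = r y \<Longrightarrow> s (m x y) = s y"
  using G unfolding groupoid_def by auto
lemma gassoc: "x \<in> Y \<Longrightarrow> y \<in> Y \<Longrightarrow> z \<in> Y \<Longrightarrow> s x = r y \<Longrightarrow> s y = r z \<Longrightarrow> m (m x y) z = m x (m y z)"
  using G unfolding groupoid_def by auto
lemma LY: "x \<in> \<Lambda> \<Longrightarrow> x \<in> Y" using SC unfolding subcategory_def by auto
lemma Lm: "x \<in> \<Lambda> \<Longrightarrow> y \<in> \<Lambda> \<Longrightarrow> s x = r y \<Longrightarrow> m x y \<in> \<Lambda>"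
  using SC unfolding subcategory_def by auto
lemma Lr: "x \<in> Y \<Longrightarrow> r x \<in> \<Lambda>" using U by auto

lemma canc1: "x \<in> Y \<Longrightarrow> y \<in> Y \<Longrightarrow> r y = s x \<Longrightarrow> m (i x) (m x y) = y"
proof -
  assume a: "x \<in> Y" "y \<in> Y" "r y = s x"
  have "m (i x) (m x y) = m (m (i x) x) y" using a gY gid by (simp add: gassoc)
  also have "\<dots> = y" using a by (simp add: gunit) (metis gunit(1))
  finally show ?thesis .
qed

lemma canc2: "x \<in> Y \<Longrightarrow> y \<in> Y \<Longrightarrow> r y = r x \<Longrightarrow> m x (m (i x) y) = y"
proof -
  assume a: "x \<in> Y" "y \<in> Y" "r y = r x"
  have "m x (m (i x) y) = m (m x (i x)) y" using a gY gid by (simp add: gassoc)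
  also have "\<dots> = y" using a by (simp add: gunit) (metis gunit(1))
  finally show ?thesis .
qed

lemma lcancel: "x \<in> Y \<Longrightarrow> y \<in> Y \<Longrightarrow> y' \<in> Y \<Longrightarrow> r y = s x \<Longrightarrow> r y' = s x \<Longrightarrow> m x y = m x y' \<Longrightarrow> y = y'"
  by (metis canc1)

abbreviation "tauL \<equiv> tau r s m \<Lambda>"
abbreviation "sigmaL \<equiv> sigma r s m \<Lambda>"
abbreviation "zz \<equiv> zzmap r s m \<Lambda>"

lemma tau_Some: "tauL b w = Some u \<longleftrightarrow> w \<in> \<Lambda> \<and> r w = s b \<and> u = m b w"
  by (auto simp: tau_def)

lemma sigma_iff: assumes "a \<in> Y" shows "sigmaL a u = Some c \<longleftrightarrow> tauL a c = Some u"
proof -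
  have uniq: "c' = c" if "c \<in> \<Lambda>" "r c = s a" "m a c = u" "c' \<in> \<Lambda>" "r c' = s a" "m a c' = u" for c c'
    using lcancel[OF assms, of c c'] that LY by auto
  show ?thesis
  proof
    assume h: "sigmaL a u = Some c"
    then have ex: "\<exists>c\<in>\<Lambda>. r c = s a \<and> m a c = u" by (auto simp: sigma_def split: if_splits)
    then obtain c0 where c0: "c0 \<in> \<Lambda>" "r c0 = s a" "m a c0 = u" by blast
    have "(THE c. c \<in> \<Lambda> \<and> r c = s a \<and> m a c = u) = c0"
      using c0 uniq by (intro the_equality) auto
    then have "c = c0" using h ex by (simp add: sigma_def)
    thus "tauL a c = Some u" using c0 by (simp add: tau_def)
  next
    assume h: "tauL a c = Some u"
    then have c: "c \<in> \<Lambda>" "r c = s a" "m a c = u" by (auto simp: tau_def split: if_splits)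
    have "(THE c. c \<in> \<Lambda> \<and> r c = s a \<and> m a c = u) = c"
      using c uniq by (intro the_equality) auto
    thus "sigmaL a u = Some c" using c by (auto simp: sigma_def)
  qed
qed

lemma sigma_eq: assumes a: "a \<in> \<Lambda>"
  shows "sigmaL a u = (if u \<in> \<Lambda> \<and> r u = r a \<and> m (i a) u \<in> \<Lambda> then Some (m (i a) u) else None)"
proof (cases "u \<in> \<Lambda> \<and> r u = r a \<and> m (i a) u \<in> \<Lambda>")
  case True
  have aY: "a \<in> Y" using a LY by auto
  have "r (m (i a) u) = s a" using gm(2)[OF gY(3)[OF aY] LY[of u]] gid(5,6)[OF aY] True by simp
  then have "tauL a (m (i a) u) = Some u"
    using True aY LY gY gid canc2 by (auto simp: tau_def)
  then show ?thesis using True sigma_iff[OF aY] by simp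
next
  case False
  have aY: "a \<in> Y" using a LY by auto
  have "sigmaL a u = None"
  proof (rule ccontr)
    assume "sigmaL a u \<noteq> None"
    then obtain c where "sigmaL a u = Some c" by auto
    then have "tauL a c = Some u" using sigma_iff[OF aY] by simp
    then have c: "c \<in> \<Lambda>" "r c = s a" "u = m a c" by (auto simp: tau_def split: if_splits)
    then have "u \<in> \<Lambda>" "r u = r a" "m (i a) u = c"
      using Lm[OF a c(1)] gm[OF aY LY[OF c(1)]] canc1[OF aY LY[OF c(1)]] by auto
    thus False using False c by auto
  qed
  then show ?thesis using False by simp
qed

lemma Wop_pop: assumes "a \<in> \<Lambda>" shows "Wop r m i \<Lambda> a = pop (sigmaL a)"
  by (rule ext, rule ext) (simp add: Wop_def pop_def sigma_eq[OF assms])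

lemma zz_append: "zz (z1 @ z2) x = (case zz z2 x of None \<Rightarrow> None | Some y \<Rightarrow> zz z1 y)"
  by (induction z1 arbitrary: x) (auto split: option.split)

definition ok :: "('a \<times> 'a) list \<Rightarrow> bool" where "ok z \<longleftrightarrow> (\<forall>(a,b)\<in>set z. a \<in> \<Lambda> \<and> b \<in> \<Lambda>)"

definition zrev :: "('a \<times> 'a) list \<Rightarrow> ('a \<times> 'a) list" where
  "zrev z = rev (map (\<lambda>(a,b). (b,a)) z)"

lemma ok_simps[simp]: "ok []" "ok ((a,b)#z) \<longleftrightarrow> a \<in> \<Lambda> \<and> b \<in> \<Lambda> \<and> ok z" "ok (z1 @ z2) \<longleftrightarrow> ok z1 \<and> ok z2"
  by (auto simp: ok_def)

lemma zrev_simps[simp]: "zrev [] = []" "zrev ((a,b)#z) = zrev z @ [(b,a)]" "zrev z = [] \<longleftrightarrow> z = []"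
  "ok (zrev z) \<longleftrightarrow> ok z"
  by (auto simp: zrev_def ok_def)

lemma zz_Cons: "zz ((a,b)#z) x = Some y \<longleftrightarrow> (\<exists>w. zz z x = Some w \<and> w \<in> \<Lambda> \<and> r w = s b \<and> sigmaL a (m b w) = Some y)"
  by (auto simp: bind_eq_Some_conv tau_def)

lemma zz_rev: "ok z \<Longrightarrow> zz z x = Some y \<longleftrightarrow> zz (zrev z) y = Some x"
proof (induction z arbitrary: x y)
  case Nil
  then show ?case by auto
next
  case (Cons p z)
  obtain a b where p: "p = (a,b)" by fastforce
  have ab: "a \<in> Y" "b \<in> Y" "ok z" using Cons.prems p LY by auto
  have "zz ((a,b)#z) x = Some y \<longleftrightarrow> (\<exists>w u. zz z x = Some w \<and> tauL b w = Some u \<and> sigmaL a u = Some y)"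
    by (auto simp: bind_eq_Some_conv)
  also have "\<dots> \<longleftrightarrow> (\<exists>w u. zz (zrev z) w = Some x \<and> sigmaL b u = Some w \<and> tauL a y = Some u)"
    using Cons.IH[OF ab(3)] sigma_iff[OF ab(1)] sigma_iff[OF ab(2)] by auto
  also have "\<dots> \<longleftrightarrow> zz (zrev ((a,b)#z)) y = Some x"
    by (auto simp: zz_append bind_eq_Some_conv split: option.split)
  finally show ?case using p by simp
qed

lemma zrev_zrev[simp]: "zrev (zrev z) = z"
  by (induction z) (auto simp: zrev_def)

lemma zz_inj: "ok z \<Longrightarrow> zz z x = Some y \<Longrightarrow> zz z x' = Some y \<Longrightarrow> x = x'"
proof -
  assume a: "ok z" "zz z x = Some y" "zz z x' = Some y"
  have "zz (zrev z) y = Some x" "zz (zrev z) y = Some x'" using a zz_rev[OF a(1)] by blast+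
  thus "x = x'" by simp
qed

lemma zz_dom: "z \<noteq> [] \<Longrightarrow> zz z x = Some y \<Longrightarrow> x \<in> \<Lambda>"
proof (induction z arbitrary: y)
  case Nil then show ?case by simp
next
  case (Cons p z)
  obtain a b where p: "p = (a,b)" by fastforce
  from Cons.prems obtain w where w: "zz z x = Some w" "w \<in> \<Lambda>" unfolding p zz_Cons by auto
  show ?case
  proof (cases "z = []")
    case True then show ?thesis using w by simp
  next
    case False then show ?thesis using Cons.IH w by blast
  qed
qed

lemma zz_out: "a \<in> Y \<Longrightarrow> zz ((a,b)#z) x = Some y \<Longrightarrow> y \<in> \<Lambda> \<and> r y = s a"
  by (auto simp: bind_eq_Some_conv sigma_iff tau_def split: if_splits)

lemma zz_in: "ok z \<Longrightarrow> z \<noteq> [] \<Longrightarrow> zz z x = Some y \<Longrightarrow> r x = s (snd (last z))"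
proof (induction z arbitrary: y)
  case Nil then show ?case by simp
next
  case (Cons p z)
  obtain a b where p: "p = (a,b)" by fastforce
  from Cons.prems obtain w where w: "zz z x = Some w" "w \<in> \<Lambda>" "r w = s b" unfolding p zz_Cons by blast
  show ?case
  proof (cases "z = []")
    case True then show ?thesis using w p by simp
  next
    case False then show ?thesis using Cons.IH w p Cons.prems by auto
  qed
qed

lemma zz_s: "ok z \<Longrightarrow> x \<in> Y \<Longrightarrow> zz z x = Some y \<Longrightarrow> y \<in> Y \<and> s y = s x"
proof (induction z arbitrary: y)
  case Nil then show ?case by simp
next
  case (Cons p z)
  obtain a b where p: "p = (a,b)" by fastforce
  have ab: "a \<in> Y" "b \<in> Y" "ok z" using Cons.prems p LY by auto
  from Cons.prems obtain w where w: "zz z x = Some w" "w \<in> \<Lambda>" "r w = s b" "sigmaL a (m b w) = Some y"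
    unfolding p zz_Cons by blast
  have IH: "s w = s x" using Cons.IH[OF ab(3) Cons.prems(2) w(1)] by simp
  have t: "tauL a y = Some (m b w)" using w(4) sigma_iff[OF ab(1)] by simp
  then have y: "y \<in> \<Lambda>" "r y = s a" "m b w = m a y" by (auto simp: tau_def split: if_splits)
  have "s (m b w) = s w" using gm(3)[OF ab(2) LY[OF w(2)]] w by simp
  moreover have "s (m a y) = s y" using gm(3)[OF ab(1) LY[OF y(1)]] y by simp
  ultimately show ?case using IH y LY by simp
qed

lemma zig_ok: "z \<in> zigzags r s \<Lambda> \<Longrightarrow> ok z \<and> z \<noteq> []"
  unfolding zigzags_def ok_def by (force simp: in_set_conv_nth)

lemma zig_single: "a \<in> \<Lambda> \<Longrightarrow> b \<in> \<Lambda> \<Longrightarrow> r a = r b \<Longrightarrow> [(a,b)] \<in> zigzags r s \<Lambda>"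
  unfolding zigzags_def by auto

lemma zig_cons: assumes "z \<in> zigzags r s \<Lambda>" "a \<in> \<Lambda>" "b \<in> \<Lambda>" "r a = r b" "s (fst (hd z)) = s b"
  shows "(a,b)#z \<in> zigzags r s \<Lambda>"
proof -
  have ne: "z \<noteq> []" using assms(1) by (simp add: zigzags_def)
  have Z: "\<And>k. k < length z \<Longrightarrow> fst (z!k) \<in> \<Lambda> \<and> snd (z!k) \<in> \<Lambda> \<and> r (fst (z!k)) = r (snd (z!k))
        \<and> (Suc k < length z \<longrightarrow> s (fst (z!Suc k)) = s (snd (z!k)))" using assms(1) by (simp add: zigzags_def)
  show ?thesis unfolding zigzags_def
  proof (safe)
    fix k assume k: "k < length ((a,b)#z)"
    show "fst (((a,b)#z)!k) \<in> \<Lambda>" "snd (((a,b)#z)!k) \<in> \<Lambda>" "r (fst (((a,b)#z)!k)) = r (snd (((a,b)#z)!k))"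
      using k assms Z by (cases k; auto)+
    show "Suc k < length ((a,b)#z) \<Longrightarrow> s (fst (((a,b)#z)!Suc k)) = s (snd (((a,b)#z)!k))"
      using k assms Z ne by (cases k) (auto simp: hd_conv_nth)
  qed
qed

lemma good_zig: "ok z \<Longrightarrow> z \<noteq> [] \<Longrightarrow> zz z x = Some y \<Longrightarrow> z \<in> zigzags r s \<Lambda>"
proof (induction z arbitrary: y)
  case Nil then show ?case by simp
next
  case (Cons p z)
  obtain a b where p: "p = (a,b)" by fastforce
  have ab: "a \<in> \<Lambda>" "b \<in> \<Lambda>" "ok z" using Cons.prems p by auto
  from Cons.prems obtain w where w: "zz z x = Some w" "w \<in> \<Lambda>" "r w = s b" "sigmaL a (m b w) = Some y"
    unfolding p zz_Cons by blast
  have t: "tauL a y = Some (m b w)" using w(4) sigma_iff[OF LY[OF ab(1)]] by simp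
  then have y: "y \<in> \<Lambda>" "r y = s a" "m b w = m a y" by (auto simp: tau_def split: if_splits)
  have rab: "r a = r b"
    using gm(2)[OF LY[OF ab(2)] LY[OF w(2)]] gm(2)[OF LY[OF ab(1)] LY[OF y(1)]] w y by simp
  show ?case
  proof (cases "z = []")
    case True then show ?thesis using p zig_single ab rab by simp
  next
    case False
    then obtain a' b' z' where z: "z = (a',b')#z'" by (metis list.exhaust prod.exhaust)
    have "r w = s a'" using zz_out[of a' b' z' x w] w z LY ab(3) by auto
    then have "s (fst (hd z)) = s b" using z w by simp
    then show ?thesis using zig_cons[OF Cons.IH[OF ab(3) False w(1)] ab(1) ab(2) rab] p by simp
  qed
qed

end


context gctx begin

lemma step_G:
  assumes ab: "a \<in> \<Lambda>" "b \<in> \<Lambda>" and x: "x \<in> Y" and w: "w \<in> \<Lambda>" "r w = s b" "s w = s x"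
    and y: "sigmaL a (m b w) = Some y"
  shows "m y (i x) = m (i a) (m b (m w (i x)))"
proof -
  have aY: "a \<in> Y" and bY: "b \<in> Y" and wY: "w \<in> Y" using ab w LY by auto
  have t: "tauL a y = Some (m b w)" using y sigma_iff[OF aY] by simp
  then have yy: "y \<in> \<Lambda>" "r y = s a" "m a y = m b w" by (auto simp: tau_def split: if_splits)
  have yY: "y \<in> Y" using yy LY by auto
  define u where "u = m b w"
  have uY: "u \<in> Y" "r u = r b" "s u = s w" using gm[OF bY wY] w by (auto simp: u_def)
  have ru: "r u = r a" using gm(2)[OF aY yY] yy by (simp add: u_def)
  have yeq: "y = m (i a) u" using canc1[OF aY yY] yy by (simp add: u_def)
  have ixY: "i x \<in> Y" "r (i x) = s x" using gY gid x by auto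
  have "m y (i x) = m (i a) (m u (i x))"
    unfolding yeq by (rule gassoc) (use gY(3)[OF aY] uY ixY gid(6)[OF aY] ru w in auto)
  also have "m u (i x) = m b (m w (i x))"
    unfolding u_def by (rule gassoc) (use bY wY ixY w in auto)
  finally show ?thesis .
qed

lemma zz_G: "ok z \<Longrightarrow> x \<in> Y \<Longrightarrow> x' \<in> Y \<Longrightarrow> r x = r x' \<Longrightarrow> zz z x = Some y \<Longrightarrow> zz z x' = Some y'
   \<Longrightarrow> m y (i x) = m y' (i x')"
proof (induction z arbitrary: y y')
  case Nil then show ?case using gunit(3) by auto
next
  case (Cons p z)
  obtain a b where p: "p = (a,b)" by fastforce
  have ab: "a \<in> \<Lambda>" "b \<in> \<Lambda>" "ok z" using Cons.prems p by auto
  from Cons.prems(5) obtain w where w: "zz z x = Some w" "w \<in> \<Lambda>" "r w = s b" "sigmaL a (m b w) = Some y"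
    unfolding p zz_Cons by blast
  from Cons.prems(6) obtain w' where w': "zz z x' = Some w'" "w' \<in> \<Lambda>" "r w' = s b" "sigmaL a (m b w') = Some y'"
    unfolding p zz_Cons by blast
  have sw: "s w = s x" "s w' = s x'" using zz_s[OF ab(3) Cons.prems(2) w(1)] zz_s[OF ab(3) Cons.prems(3) w'(1)] by auto
  have IH: "m w (i x) = m w' (i x')" using Cons.IH[OF ab(3) Cons.prems(2,3,4) w(1) w'(1)] .
  show ?case
    using step_G[OF ab(1,2) Cons.prems(2) w(2,3) sw(1) w(4)] step_G[OF ab(1,2) Cons.prems(3) w'(2,3) sw(2) w'(4)] IH
    by simp
qed

lemma one_point:
  assumes t: "t \<in> Y" and z: "ok z" "z \<noteq> []" and b: "zz z b = Some (m t b)" "r b = s t"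
    and b': "zz z b' = Some y'"
  shows "y' = m t b' \<and> r b' = s t"
proof -
  have bL: "b \<in> \<Lambda>" "b' \<in> \<Lambda>" using zz_dom z b b' by blast+
  have bY: "b \<in> Y" "b' \<in> Y" using bL LY by auto
  have rb': "r b' = s t" using zz_in[OF z b(1)] zz_in[OF z b'] b by simp
  have G: "m y' (i b') = m (m t b) (i b)" using zz_G[OF z(1) bY(2) bY(1) _ b' b(1)] rb' b by simp
  also have "\<dots> = m t (m b (i b))" by (rule gassoc) (use t bY gY gid b in auto)
  also have "\<dots> = t" using gunit(3)[OF bY(1)] b gunit(2)[OF t] by simp
  finally have G': "m y' (i b') = t" .
  have ys: "y' \<in> Y" "s y' = s b'" using zz_s[OF z(1) bY(2) b'] by auto
  have "y' = m y' (m (i b') b')" using gunit(4)[OF bY(2)] gunit(2)[OF ys(1)] ys by simp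
  also have "\<dots> = m (m y' (i b')) b'" by (rule gassoc[symmetric]) (use ys bY gY gid in auto)
  finally show ?thesis using G' rb' by simp
qed

definition Vz :: "('a \<times> 'a) list \<Rightarrow> 'a op" where "Vz z = pop (zz z)"

lemma V_l2: "ok z \<Longrightarrow> z \<noteq> [] \<Longrightarrow> f \<in> l2 \<Lambda> \<Longrightarrow> Vz z f \<in> l2 \<Lambda> \<and> l2norm (Vz z f) \<le> l2norm f"
  unfolding Vz_def using pop_l2[of "zz z" \<Lambda> f] zz_inj zz_dom by blast

lemma V_adj: "ok z \<Longrightarrow> l2inner (Vz z f) g = l2inner f (Vz (zrev z) g)"
  unfolding Vz_def by (rule pop_adj) (rule zz_rev)

lemma V_comp: "Vz z1 (Vz z2 f) = Vz (z2 @ z1) f"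
  by (rule ext) (simp add: Vz_def pop_def zz_append split: option.split)

lemma V_lin: "Vz z (\<lambda>y. c * g y + h y) x = c * Vz z g x + Vz z h x"
  "Vz z (\<lambda>y. g y - h y) x = Vz z g x - Vz z h x"
  by (simp_all add: Vz_def pop_def split: option.split)

definition spanop :: "(complex \<times> ('a \<times> 'a) list) list \<Rightarrow> 'a op" where
  "spanop L f x = sum_list (map (\<lambda>(c,z). c * Vz z f x) L)"

definition goodL :: "(complex \<times> ('a \<times> 'a) list) list \<Rightarrow> bool" where
  "goodL L \<longleftrightarrow> (\<forall>(c,z)\<in>set L. ok z \<and> z \<noteq> [])"

definition cnorm :: "(complex \<times> ('a \<times> 'a) list) list \<Rightarrow> real" where
  "cnorm L = sum_list (map (\<lambda>(c,z). cmod c) L)"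

lemma span_simps: "spanop [] f = (\<lambda>x. 0)" "spanop ((c,z)#L) f = (\<lambda>x. c * Vz z f x + spanop L f x)"
  by (auto simp: spanop_def)

lemma goodL_simps[simp]: "goodL []" "goodL ((c,z)#L) \<longleftrightarrow> ok z \<and> z \<noteq> [] \<and> goodL L"
  "goodL (L1 @ L2) \<longleftrightarrow> goodL L1 \<and> goodL L2"
  by (auto simp: goodL_def)

lemma cnorm_nonneg: "cnorm L \<ge> 0"
  unfolding cnorm_def by (induction L) auto

lemma span_l2: "goodL L \<Longrightarrow> f \<in> l2 \<Lambda> \<Longrightarrow> spanop L f \<in> l2 \<Lambda> \<and> l2norm (spanop L f) \<le> cnorm L * l2norm f"
proof (induction L)
  case Nil then show ?case by (simp add: span_simps l2_zero cnorm_def)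
next
  case (Cons p L)
  obtain c z where p: "p = (c,z)" by fastforce
  have g: "ok z" "z \<noteq> []" "goodL L" using Cons.prems p by auto
  have V: "Vz z f \<in> l2 \<Lambda>" "l2norm (Vz z f) \<le> l2norm f" using V_l2[OF g(1,2) Cons.prems(2)] by auto
  have cV: "(\<lambda>x. c * Vz z f x) \<in> l2 \<Lambda>" "l2norm (\<lambda>x. c * Vz z f x) = cmod c * l2norm (Vz z f)"
    using l2_scale[OF V(1)] by auto
  have IH: "spanop L f \<in> l2 \<Lambda>" "l2norm (spanop L f) \<le> cnorm L * l2norm f" using Cons.IH[OF g(3) Cons.prems(2)] by auto
  have A: "(\<lambda>x. c * Vz z f x + spanop L f x) \<in> l2 \<Lambda>"
    "l2norm (\<lambda>x. c * Vz z f x + spanop L f x) \<le> l2norm (\<lambda>x. c * Vz z f x) + l2norm (spanop L f)"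
    using l2_add[OF cV(1) IH(1)] by auto
  have "cmod c * l2norm (Vz z f) \<le> cmod c * l2norm f" using V(2) by (simp add: mult_left_mono)
  then have "l2norm (\<lambda>x. c * Vz z f x + spanop L f x) \<le> (cmod c + cnorm L) * l2norm f"
    using A(2) cV(2) IH(2) by (simp add: distrib_right)
  then show ?case using A(1) p by (simp add: span_simps cnorm_def)
qed

definition adjL :: "(complex \<times> ('a \<times> 'a) list) list \<Rightarrow> (complex \<times> ('a \<times> 'a) list) list" where
  "adjL L = map (\<lambda>(c,z). (cnj c, zrev z)) L"

lemma adjL_simps[simp]: "adjL [] = []" "adjL ((c,z)#L) = (cnj c, zrev z) # adjL L" "goodL (adjL L) \<longleftrightarrow> goodL L"
  by (auto simp: adjL_def goodL_def)

lemma span_adj: "goodL L \<Longrightarrow> f \<in> l2 \<Lambda> \<Longrightarrow> g \<in> l2 \<Lambda> \<Longrightarrow> l2inner (spanop L f) g = l2inner f (spanop (adjL L) g)"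
proof (induction L)
  case Nil then show ?case by (simp add: span_simps l2inner_def)
next
  case (Cons p L)
  obtain c z where p: "p = (c,z)" by fastforce
  have gd: "ok z" "z \<noteq> []" "goodL L" using Cons.prems p by auto
  have gd': "ok (zrev z)" "zrev z \<noteq> []" "goodL (adjL L)" using gd by auto
  have V: "Vz z f \<in> l2 \<Lambda>" using V_l2[OF gd(1,2) Cons.prems(2)] by auto
  have V': "Vz (zrev z) g \<in> l2 \<Lambda>" using V_l2[OF gd'(1,2) Cons.prems(3)] by auto
  have S: "spanop L f \<in> l2 \<Lambda>" using span_l2[OF gd(3) Cons.prems(2)] by auto
  have S': "spanop (adjL L) g \<in> l2 \<Lambda>" using span_l2[OF gd'(3) Cons.prems(3)] by auto
  have "l2inner (\<lambda>x. c * Vz z f x + spanop L f x) g = l2inner (\<lambda>x. c * Vz z f x) g + l2inner (spanop L f) g"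
    by (rule l2inner_add_left[OF Cons.prems(3) l2_scale(1)[OF V] S])
  also have "\<dots> = cnj c * l2inner f (Vz (zrev z) g) + l2inner f (spanop (adjL L) g)"
    using Cons.IH[OF gd(3) Cons.prems(2,3)] by (simp add: l2inner_scale_left V_adj[OF gd(1)])
  also have "\<dots> = l2inner f (\<lambda>x. cnj c * Vz (zrev z) g x) + l2inner f (spanop (adjL L) g)"
    by (simp add: l2inner_scale_right)
  also have "\<dots> = l2inner f (\<lambda>x. cnj c * Vz (zrev z) g x + spanop (adjL L) g x)"
    by (rule l2inner_add_right[OF Cons.prems(2) l2_scale(1)[OF V'] S', symmetric])
  finally show ?case using p by (simp add: span_simps)
qed

lemma span_diff: "spanop L (\<lambda>x. f x - g x) x = spanop L f x - spanop L g x"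
  by (induction L) (auto simp: span_simps V_lin algebra_simps)

lemma span_append: "spanop (L1 @ L2) f x = spanop L1 f x + spanop L2 f x"
  by (simp add: spanop_def)

lemma span_scale: "spanop (map (\<lambda>(c,z). (k*c, z)) L) f x = k * spanop L f x"
  by (induction L) (auto simp: span_simps algebra_simps)

lemma goodL_scale[simp]: "goodL (map (\<lambda>(c,z). (k*c, z)) L) \<longleftrightarrow> goodL L"
  by (auto simp: goodL_def)

lemma V_span: "Vz z (spanop L f) x = spanop (map (\<lambda>(c,z2). (c, z2 @ z)) L) f x"
proof (induction L)
  case Nil then show ?case by (simp add: span_simps Vz_def pop_def split: option.split)
next
  case (Cons p L)
  obtain c z2 where p: "p = (c,z2)" by fastforce
  show ?case using Cons.IH unfolding p by (simp add: span_simps V_lin(1) V_comp)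
qed

definition compL :: "(complex \<times> ('a \<times> 'a) list) list \<Rightarrow> (complex \<times> ('a \<times> 'a) list) list \<Rightarrow> (complex \<times> ('a \<times> 'a) list) list" where
  "compL L1 L2 = concat (map (\<lambda>(c1,z1). map (\<lambda>(c2,z2). (c1*c2, z2 @ z1)) L2) L1)"

lemma span_comp: "spanop L1 (spanop L2 f) x = spanop (compL L1 L2) f x"
proof (induction L1)
  case Nil then show ?case by (simp add: span_simps compL_def spanop_def)
next
  case (Cons p L1)
  obtain c z where p: "p = (c,z)" by fastforce
  have e: "map (\<lambda>(c2,z2). (c*c2, z2 @ z)) L2 = map (\<lambda>(c',z'). (c*c', z')) (map (\<lambda>(c2,z2). (c2, z2 @ z)) L2)"
    by (induction L2) auto
  have "spanop (compL ((c,z)#L1) L2) f x = spanop (map (\<lambda>(c2,z2). (c*c2, z2 @ z)) L2 @ compL L1 L2) f x"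
    by (simp add: compL_def)
  also have "\<dots> = c * spanop (map (\<lambda>(c2,z2). (c2, z2 @ z)) L2) f x + spanop (compL L1 L2) f x"
    unfolding span_append e span_scale ..
  also have "\<dots> = spanop ((c,z)#L1) (spanop L2 f) x"
    using Cons.IH by (simp add: span_simps V_span)
  finally show ?case using p by simp
qed

lemma goodL_comp: "goodL L1 \<Longrightarrow> goodL L2 \<Longrightarrow> goodL (compL L1 L2)"
  by (auto simp: goodL_def compL_def)

end


context gctx begin

definition Inv :: "'a op \<Rightarrow> bool" where
  "Inv T \<longleftrightarrow> (\<forall>f\<in>l2 \<Lambda>. T f \<in> l2 \<Lambda>) \<and>
     (\<forall>\<epsilon>>0. \<exists>L. goodL L \<and> (\<forall>f\<in>l2 \<Lambda>. l2norm (\<lambda>x. T f x - spanop L f x) \<le> \<epsilon> * l2norm f))"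

lemma InvD: "Inv T \<Longrightarrow> f \<in> l2 \<Lambda> \<Longrightarrow> T f \<in> l2 \<Lambda>"
  "Inv T \<Longrightarrow> \<epsilon> > 0 \<Longrightarrow> \<exists>L. goodL L \<and> (\<forall>f\<in>l2 \<Lambda>. l2norm (\<lambda>x. T f x - spanop L f x) \<le> \<epsilon> * l2norm f)"
  unfolding Inv_def by blast+

lemma Inv_bound: assumes "Inv T" shows "\<exists>C\<ge>0. \<forall>f\<in>l2 \<Lambda>. l2norm (T f) \<le> C * l2norm f"
proof -
  obtain L where L: "goodL L" "\<And>f. f\<in>l2 \<Lambda> \<Longrightarrow> l2norm (\<lambda>x. T f x - spanop L f x) \<le> 1 * l2norm f"
    using InvD(2)[OF assms, of 1] by auto
  have "l2norm (T f) \<le> (1 + cnorm L) * l2norm f" if f: "f \<in> l2 \<Lambda>" for f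
  proof -
    have S: "spanop L f \<in> l2 \<Lambda>" "l2norm (spanop L f) \<le> cnorm L * l2norm f" using span_l2[OF L(1) f] by auto
    have e: "T f = (\<lambda>x. (\<lambda>x. T f x - spanop L f x) x + spanop L f x)" by auto
    have "l2norm (T f) \<le> l2norm (\<lambda>x. T f x - spanop L f x) + l2norm (spanop L f)"
      by (subst e, rule l2_add(2)[OF l2_diff(1)[OF InvD(1)[OF assms f] S(1)] S(1)])
    also have "\<dots> \<le> (1 + cnorm L) * l2norm f" using L(2)[OF f] S(2) by (simp add: distrib_right)
    finally show ?thesis .
  qed
  thus ?thesis using cnorm_nonneg[of L] by (intro exI[of _ "1 + cnorm L"]) auto
qed

lemma zz_single: assumes a: "a \<in> \<Lambda>" shows "zz [(a, r a)] x = sigmaL a x"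
proof -
  have aY: "a \<in> Y" using a LY by auto
  show ?thesis
  proof (cases "x \<in> \<Lambda> \<and> r x = r a")
    case True
    then have "m (r a) x = x" using gunit(1)[of x] LY by auto
    then show ?thesis using True gid(2)[OF aY] by (simp add: tau_def)
  next
    case False
    then show ?thesis using gid(2)[OF aY] by (auto simp: tau_def sigma_eq[OF a])
  qed
qed

lemma Inv_gen: assumes a: "a \<in> \<Lambda>" shows "Inv (Wop r m i \<Lambda> a)"
proof -
  have aY: "a \<in> Y" using a LY by auto
  have W: "Wop r m i \<Lambda> a = Vz [(a, r a)]"
    unfolding Wop_pop[OF a] Vz_def by (rule arg_cong[where f=pop], rule ext, rule zz_single[OF a, symmetric])
  have g: "goodL [(1, [(a, r a)])]" using a Lr[OF aY] by simp
  have sp: "spanop [(1, [(a, r a)])] f = Wop r m i \<Lambda> a f" for f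
    by (simp add: span_simps W)
  show ?thesis unfolding Inv_def
  proof (intro conjI ballI allI impI)
    fix f assume "f \<in> l2 \<Lambda>" then show "Wop r m i \<Lambda> a f \<in> l2 \<Lambda>"
      using V_l2[of "[(a, r a)]" f] a Lr[OF aY] W by simp
  next
    fix \<epsilon> :: real assume "\<epsilon> > 0"
    then show "\<exists>L. goodL L \<and> (\<forall>f\<in>l2 \<Lambda>. l2norm (\<lambda>x. Wop r m i \<Lambda> a f x - spanop L f x) \<le> \<epsilon> * l2norm f)"
      using g sp by (intro exI[of _ "[(1, [(a, r a)])]"]) (simp add: l2_zero l2norm_nonneg)
  qed
qed

lemma Inv_add: assumes T: "Inv T" and U: "Inv U" shows "Inv (\<lambda>f x. T f x + U f x)"
  unfolding Inv_def
proof (intro conjI ballI allI impI)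
  fix f assume "f \<in> l2 \<Lambda>" then show "(\<lambda>x. T f x + U f x) \<in> l2 \<Lambda>"
    using l2_add(1) InvD(1)[OF T] InvD(1)[OF U] by blast
next
  fix \<epsilon> :: real assume e: "\<epsilon> > 0"
  obtain L1 where L1: "goodL L1" "\<And>f. f\<in>l2 \<Lambda> \<Longrightarrow> l2norm (\<lambda>x. T f x - spanop L1 f x) \<le> \<epsilon>/2 * l2norm f"
    using InvD(2)[OF T, of "\<epsilon>/2"] e by auto
  obtain L2 where L2: "goodL L2" "\<And>f. f\<in>l2 \<Lambda> \<Longrightarrow> l2norm (\<lambda>x. U f x - spanop L2 f x) \<le> \<epsilon>/2 * l2norm f"
    using InvD(2)[OF U, of "\<epsilon>/2"] e by auto
  have "l2norm (\<lambda>x. T f x + U f x - spanop (L1 @ L2) f x) \<le> \<epsilon> * l2norm f" if f: "f \<in> l2 \<Lambda>" for f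
  proof -
    have e1: "(\<lambda>x. T f x + U f x - spanop (L1 @ L2) f x) = (\<lambda>x. (\<lambda>x. T f x - spanop L1 f x) x + (\<lambda>x. U f x - spanop L2 f x) x)"
      by (auto simp: span_append)
    have "l2norm (\<lambda>x. T f x + U f x - spanop (L1 @ L2) f x) \<le> l2norm (\<lambda>x. T f x - spanop L1 f x) + l2norm (\<lambda>x. U f x - spanop L2 f x)"
      unfolding e1 by (rule l2_add(2)[OF l2_diff(1)[OF InvD(1)[OF T f] conjunct1[OF span_l2[OF L1(1) f]]]
          l2_diff(1)[OF InvD(1)[OF U f] conjunct1[OF span_l2[OF L2(1) f]]]])
    also have "\<dots> \<le> \<epsilon> * l2norm f" using L1(2)[OF f] L2(2)[OF f] by simp
    finally show ?thesis .
  qed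
  then show "\<exists>L. goodL L \<and> (\<forall>f\<in>l2 \<Lambda>. l2norm (\<lambda>x. T f x + U f x - spanop L f x) \<le> \<epsilon> * l2norm f)"
    using L1(1) L2(1) by (intro exI[of _ "L1 @ L2"]) auto
qed

lemma Inv_scale: assumes T: "Inv T" shows "Inv (\<lambda>f x. c * T f x)"
  unfolding Inv_def
proof (intro conjI ballI allI impI)
  fix f assume "f \<in> l2 \<Lambda>" then show "(\<lambda>x. c * T f x) \<in> l2 \<Lambda>"
    using l2_scale(1) InvD(1)[OF T] by blast
next
  fix \<epsilon> :: real assume e: "\<epsilon> > 0"
  define \<delta> where "\<delta> = \<epsilon> / (cmod c + 1)"
  have cp: "0 < cmod c + 1" using norm_ge_zero[of c] by linarith
  have d: "\<delta> > 0" "cmod c * \<delta> \<le> \<epsilon>" using e cp unfolding \<delta>_def by (auto simp: field_simps)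
  obtain L where L: "goodL L" "\<And>f. f\<in>l2 \<Lambda> \<Longrightarrow> l2norm (\<lambda>x. T f x - spanop L f x) \<le> \<delta> * l2norm f"
    using InvD(2)[OF T d(1)] by auto
  let ?L = "map (\<lambda>(c',z). (c*c', z)) L"
  have "l2norm (\<lambda>x. c * T f x - spanop ?L f x) \<le> \<epsilon> * l2norm f" if f: "f \<in> l2 \<Lambda>" for f
  proof -
    have e1: "(\<lambda>x. c * T f x - spanop ?L f x) = (\<lambda>x. c * (\<lambda>x. T f x - spanop L f x) x)"
      by (auto simp: span_scale right_diff_distrib)
    have "l2norm (\<lambda>x. c * T f x - spanop ?L f x) = cmod c * l2norm (\<lambda>x. T f x - spanop L f x)"
      unfolding e1 by (rule l2_scale(2)[OF l2_diff(1)[OF InvD(1)[OF T f] conjunct1[OF span_l2[OF L(1) f]]]])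
    also have "\<dots> \<le> cmod c * (\<delta> * l2norm f)" using L(2)[OF f] by (simp add: mult_left_mono)
    also have "\<dots> \<le> \<epsilon> * l2norm f" using d(2) l2norm_nonneg[of f] by (simp add: mult.assoc[symmetric] mult_right_mono)
    finally show ?thesis .
  qed
  then show "\<exists>L. goodL L \<and> (\<forall>f\<in>l2 \<Lambda>. l2norm (\<lambda>x. c * T f x - spanop L f x) \<le> \<epsilon> * l2norm f)"
    using L(1) by (intro exI[of _ ?L]) auto
qed

lemma Inv_mult: assumes T: "Inv T" and U: "Inv U" shows "Inv (\<lambda>f. T (U f))"
  unfolding Inv_def
proof (intro conjI ballI allI impI)
  fix f assume "f \<in> l2 \<Lambda>" then show "T (U f) \<in> l2 \<Lambda>"
    using InvD(1)[OF T] InvD(1)[OF U] by blast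
next
  fix \<epsilon> :: real assume e: "\<epsilon> > 0"
  obtain C where C: "C \<ge> 0" "\<And>f. f\<in>l2 \<Lambda> \<Longrightarrow> l2norm (U f) \<le> C * l2norm f" using Inv_bound[OF U] by auto
  define \<delta>1 where "\<delta>1 = \<epsilon> / (2 * (C + 1))"
  have d1: "\<delta>1 > 0" "\<delta>1 * C \<le> \<epsilon> / 2" using e C(1) unfolding \<delta>1_def by (auto simp: field_simps)
  obtain L1 where L1: "goodL L1" "\<And>f. f\<in>l2 \<Lambda> \<Longrightarrow> l2norm (\<lambda>x. T f x - spanop L1 f x) \<le> \<delta>1 * l2norm f"
    using InvD(2)[OF T d1(1)] by auto
  define \<delta>2 where "\<delta>2 = \<epsilon> / (2 * (cnorm L1 + 1))"
  have d2: "\<delta>2 > 0" "cnorm L1 * \<delta>2 \<le> \<epsilon> / 2" using e cnorm_nonneg[of L1] unfolding \<delta>2_def by (auto simp: field_simps)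
  obtain L2 where L2: "goodL L2" "\<And>f. f\<in>l2 \<Lambda> \<Longrightarrow> l2norm (\<lambda>x. U f x - spanop L2 f x) \<le> \<delta>2 * l2norm f"
    using InvD(2)[OF U d2(1)] by auto
  have "l2norm (\<lambda>x. T (U f) x - spanop (compL L1 L2) f x) \<le> \<epsilon> * l2norm f" if f: "f \<in> l2 \<Lambda>" for f
  proof -
    have Uf: "U f \<in> l2 \<Lambda>" using InvD(1)[OF U f] .
    have S2: "spanop L2 f \<in> l2 \<Lambda>" using span_l2[OF L2(1) f] by auto
    have S1U: "spanop L1 (U f) \<in> l2 \<Lambda>" using span_l2[OF L1(1) Uf] by auto
    have S12: "spanop L1 (spanop L2 f) \<in> l2 \<Lambda>" using span_l2[OF L1(1) S2] by auto
    have D: "(\<lambda>x. U f x - spanop L2 f x) \<in> l2 \<Lambda>" using l2_diff(1)[OF Uf S2] .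
    have ec: "spanop (compL L1 L2) f = spanop L1 (spanop L2 f)" by (rule ext) (simp add: span_comp)
    have "l2norm (\<lambda>x. T (U f) x - spanop (compL L1 L2) f x)
        \<le> l2norm (\<lambda>x. T (U f) x - spanop L1 (U f) x) + l2norm (\<lambda>x. spanop L1 (U f) x - spanop L1 (spanop L2 f) x)"
      unfolding ec by (rule l2_tri[OF InvD(1)[OF T Uf] S1U S12])
    also have "spanop L1 (\<lambda>x. U f x - spanop L2 f x) = (\<lambda>x. spanop L1 (U f) x - spanop L1 (spanop L2 f) x)"
      by (rule ext) (rule span_diff)
    then have "l2norm (\<lambda>x. spanop L1 (U f) x - spanop L1 (spanop L2 f) x) = l2norm (spanop L1 (\<lambda>x. U f x - spanop L2 f x))"
      by simp
    also have "\<dots> \<le> cnorm L1 * l2norm (\<lambda>x. U f x - spanop L2 f x)" using span_l2[OF L1(1) D] by auto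
    also have "\<dots> \<le> cnorm L1 * (\<delta>2 * l2norm f)" using L2(2)[OF f] cnorm_nonneg by (simp add: mult_left_mono)
    also have "l2norm (\<lambda>x. T (U f) x - spanop L1 (U f) x) \<le> \<delta>1 * l2norm (U f)" using L1(2)[OF Uf] .
    also have "\<dots> \<le> \<delta>1 * (C * l2norm f)" using C(2)[OF f] d1(1) by (simp add: mult_left_mono)
    finally have "l2norm (\<lambda>x. T (U f) x - spanop (compL L1 L2) f x) \<le> (\<delta>1 * C) * l2norm f + (cnorm L1 * \<delta>2) * l2norm f"
      by (simp add: mult.assoc)
    also have "\<dots> \<le> (\<epsilon>/2) * l2norm f + (\<epsilon>/2) * l2norm f"
      using d1(2) d2(2) l2norm_nonneg[of f] by (intro add_mono mult_right_mono) auto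
    finally show ?thesis by simp
  qed
  then show "\<exists>L. goodL L \<and> (\<forall>f\<in>l2 \<Lambda>. l2norm (\<lambda>x. T (U f) x - spanop L f x) \<le> \<epsilon> * l2norm f)"
    using goodL_comp[OF L1(1) L2(1)] by (intro exI[of _ "compL L1 L2"]) auto
qed

lemma Inv_adj: assumes T: "Inv T" and T': "\<forall>g\<in>l2 \<Lambda>. T' g \<in> l2 \<Lambda>"
  and adj: "\<forall>f\<in>l2 \<Lambda>. \<forall>g\<in>l2 \<Lambda>. l2inner (T f) g = l2inner f (T' g)"
  shows "Inv T'"
  unfolding Inv_def
proof (intro conjI ballI allI impI)
  fix f assume "f \<in> l2 \<Lambda>" then show "T' f \<in> l2 \<Lambda>" using T' by blast
next
  fix \<epsilon> :: real assume e: "\<epsilon> > 0"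
  obtain L where L: "goodL L" "\<And>f. f\<in>l2 \<Lambda> \<Longrightarrow> l2norm (\<lambda>x. T f x - spanop L f x) \<le> \<epsilon> * l2norm f"
    using InvD(2)[OF T e] by auto
  have gL: "goodL (adjL L)" using L(1) by simp
  have "l2norm (\<lambda>x. T' g x - spanop (adjL L) g x) \<le> \<epsilon> * l2norm g" if g: "g \<in> l2 \<Lambda>" for g
  proof -
    define v where "v = (\<lambda>x. T' g x - spanop (adjL L) g x)"
    have T'g: "T' g \<in> l2 \<Lambda>" using T' g by blast
    have S'g: "spanop (adjL L) g \<in> l2 \<Lambda>" using span_l2[OF gL g] by auto
    have v: "v \<in> l2 \<Lambda>" unfolding v_def by (rule l2_diff(1)[OF T'g S'g])
    have Tv: "T v \<in> l2 \<Lambda>" using InvD(1)[OF T v] .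
    have Sv: "spanop L v \<in> l2 \<Lambda>" using span_l2[OF L(1) v] by auto
    have "complex_of_real ((l2norm v)\<^sup>2) = l2inner v v" using l2inner_self[OF v] by simp
    also have "\<dots> = l2inner v (T' g) - l2inner v (spanop (adjL L) g)"
      by (subst (2) v_def) (rule l2inner_diff_right[OF v T'g S'g])
    also have "\<dots> = l2inner (T v) g - l2inner (spanop L v) g"
      using adj v g span_adj[OF L(1) v g] by simp
    also have "\<dots> = l2inner (\<lambda>x. T v x - spanop L v x) g"
      by (rule l2inner_diff_left[OF g Tv Sv, symmetric])
    finally have eq: "complex_of_real ((l2norm v)\<^sup>2) = l2inner (\<lambda>x. T v x - spanop L v x) g" .
    have "(l2norm v)\<^sup>2 = cmod (complex_of_real ((l2norm v)\<^sup>2))" by (simp only: norm_of_real abs_power2)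
    also have "\<dots> = cmod (l2inner (\<lambda>x. T v x - spanop L v x) g)" by (simp only: eq)
    also have "\<dots> \<le> l2norm (\<lambda>x. T v x - spanop L v x) * l2norm g"
      by (rule cauchy_schwarz[OF l2_diff(1)[OF Tv Sv] g])
    also have "\<dots> \<le> (\<epsilon> * l2norm v) * l2norm g"
      using L(2)[OF v] l2norm_nonneg[of g] by (rule mult_right_mono)
    finally have "l2norm v * l2norm v \<le> l2norm v * (\<epsilon> * l2norm g)" by (simp add: power2_eq_square mult_ac)
    then have "l2norm v \<le> \<epsilon> * l2norm g"
      using l2norm_nonneg[of v] l2norm_nonneg[of g] e
      by (cases "l2norm v = 0") (auto simp: mult_le_cancel_left)
    then show ?thesis unfolding v_def .
  qed
  then show "\<exists>L. goodL L \<and> (\<forall>g\<in>l2 \<Lambda>. l2norm (\<lambda>x. T' g x - spanop L g x) \<le> \<epsilon> * l2norm g)"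
    using gL by (intro exI[of _ "adjL L"]) auto
qed

lemma Inv_lim: assumes Ts: "\<And>n::nat. Inv (Ts n)" and T: "\<forall>f\<in>l2 \<Lambda>. T f \<in> l2 \<Lambda>"
  and conv: "\<forall>\<epsilon>>0. \<exists>N. \<forall>n\<ge>N. \<forall>f\<in>l2 \<Lambda>. l2norm (\<lambda>x. Ts n f x - T f x) \<le> \<epsilon> * l2norm f"
  shows "Inv T"
  unfolding Inv_def
proof (intro conjI ballI allI impI)
  fix f assume "f \<in> l2 \<Lambda>" then show "T f \<in> l2 \<Lambda>" using T by blast
next
  fix \<epsilon> :: real assume e: "\<epsilon> > 0"
  obtain N where N: "\<And>f. f\<in>l2 \<Lambda> \<Longrightarrow> l2norm (\<lambda>x. Ts N f x - T f x) \<le> \<epsilon>/2 * l2norm f"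
    using conv e by (metis half_gt_zero order_refl)
  obtain L where L: "goodL L" "\<And>f. f\<in>l2 \<Lambda> \<Longrightarrow> l2norm (\<lambda>x. Ts N f x - spanop L f x) \<le> \<epsilon>/2 * l2norm f"
    using InvD(2)[OF Ts, of "\<epsilon>/2" N] e by auto
  have "l2norm (\<lambda>x. T f x - spanop L f x) \<le> \<epsilon> * l2norm f" if f: "f \<in> l2 \<Lambda>" for f
  proof -
    have "l2norm (\<lambda>x. T f x - spanop L f x) \<le> l2norm (\<lambda>x. T f x - Ts N f x) + l2norm (\<lambda>x. Ts N f x - spanop L f x)"
      by (rule l2_tri[OF _ InvD(1)[OF Ts f] conjunct1[OF span_l2[OF L(1) f]]]) (use T f in blast)
    also have "\<dots> \<le> \<epsilon>/2 * l2norm f + \<epsilon>/2 * l2norm f"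
      using N[OF f] L(2)[OF f] l2norm_minus_commute[of "T f" "Ts N f"] by simp
    finally show ?thesis by simp
  qed
  then show "\<exists>L. goodL L \<and> (\<forall>f\<in>l2 \<Lambda>. l2norm (\<lambda>x. T f x - spanop L f x) \<le> \<epsilon> * l2norm f)"
    using L(1) by (intro exI[of _ L]) auto
qed

lemma Cstar_Inv: "T \<in> Cstar_gen \<Lambda> (Wop r m i \<Lambda> ` \<Lambda>) \<Longrightarrow> Inv T"
proof (induction rule: Cstar_gen.induct)
  case (gen T) then show ?case using Inv_gen by auto
next
  case (add T U) then show ?case using Inv_add by blast
next
  case (scale T c) then show ?case using Inv_scale by blast
next
  case (mult T U) then show ?case using Inv_mult by blast
next
  case (adj T T') then show ?case using Inv_adj by blast
next
  case (lim Ts T) then show ?case using Inv_lim by blast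
qed

end


context gctx begin

lemma span_ebase_zero: "(\<forall>(c,z)\<in>set L. zz z x \<noteq> Some b) \<Longrightarrow> spanop L (ebase b) x = 0"
  by (induction L) (auto simp: span_simps Vz_def pop_def ebase_def split: option.split)

lemma fwd:
  assumes t: "t \<in> Y" and W: "Inv (Wop r m i \<Lambda> t)"
  shows "\<exists>F. finite F \<and> F \<subseteq> zigzags r s \<Lambda> \<and>
       (\<forall>z\<in>F. \<forall>b\<in>zzdom r s m \<Lambda> z. r b = s t \<and> zz z b = Some (m t b)) \<and>
       {b\<in>\<Lambda>. r b = s t \<and> m t b \<in> \<Lambda>} = (\<Union>z\<in>F. zzdom r s m \<Lambda> z)"
proof -
  obtain L where L: "goodL L" "\<And>f. f\<in>l2 \<Lambda> \<Longrightarrow> l2norm (\<lambda>x. Wop r m i \<Lambda> t f x - spanop L f x) \<le> 1/2 * l2norm f"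
    using InvD(2)[OF W, of "1/2"] by auto
  have key: "\<exists>c z. (c,z) \<in> set L \<and> zz z (m t b) = Some b"
    if b: "b \<in> \<Lambda>" "r b = s t" "m t b \<in> \<Lambda>" for b
  proof (rule ccontr)
    assume na: "\<not> ?thesis"
    have bY: "b \<in> Y" using b LY by auto
    have e: "ebase b \<in> l2 \<Lambda>" "l2norm (ebase b) = 1" using ebase_l2[OF b(1)] by auto
    have W1: "Wop r m i \<Lambda> t (ebase b) (m t b) = 1"
      using b gm(2)[OF t bY] canc1[OF t bY] by (simp add: Wop_def ebase_def)
    have S0: "spanop L (ebase b) (m t b) = 0" using na by (intro span_ebase_zero) auto
    have "cmod ((\<lambda>x. Wop r m i \<Lambda> t (ebase b) x - spanop L (ebase b) x) (m t b)) \<le> l2norm (\<lambda>x. Wop r m i \<Lambda> t (ebase b) x - spanop L (ebase b) x)"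
      by (rule l2_point[OF l2_diff(1)[OF InvD(1)[OF W e(1)] conjunct1[OF span_l2[OF L(1) e(1)]]]])
    also have "\<dots> \<le> 1/2" using L(2)[OF e(1)] e(2) by simp
    finally show False using W1 S0 by simp
  qed
  define Z where "Z = {z. (\<exists>c. (c,z) \<in> set L) \<and> (\<exists>b. r b = s t \<and> zz z (m t b) = Some b)}"
  define F where "F = zrev ` Z"
  have Zg: "ok z \<and> z \<noteq> []" if "z \<in> Z" for z using that L(1) unfolding Z_def goodL_def by auto
  have fin: "finite F" unfolding F_def
    by (rule finite_imageI, rule finite_subset[of _ "snd ` set L"]) (auto simp: Z_def image_iff, metis snd_conv)
  have Fw: "\<exists>b. r b = s t \<and> zz z' b = Some (m t b)" "ok z'" "z' \<noteq> []" if "z' \<in> F" for z'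
  proof -
    from that obtain z where z: "z \<in> Z" "z' = zrev z" by (auto simp: F_def)
    have g: "ok z" "z \<noteq> []" using Zg[OF z(1)] by auto
    obtain b where b: "r b = s t" "zz z (m t b) = Some b" using z(1) by (auto simp: Z_def)
    have "zz z' b = Some (m t b)" using b(2) zz_rev[OF g(1)] z(2) by blast
    then show "\<exists>b. r b = s t \<and> zz z' b = Some (m t b)" using b(1) by blast
    show "ok z'" "z' \<noteq> []" using g z(2) by auto
  qed
  have F1: "r b' = s t \<and> zz z' b' = Some (m t b')" if zF1: "z' \<in> F" and zF2: "b' \<in> zzdom r s m \<Lambda> z'" for z' b'
  proof -
    obtain b where b: "r b = s t" "zz z' b = Some (m t b)" using Fw(1)[OF zF1] by auto
    obtain y' where y': "zz z' b' = Some y'" using zF2 by (auto simp: zzdom_def)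
    show ?thesis using one_point[OF t Fw(2,3)[OF zF1] b(2) b(1) y'] y' by simp
  qed
  have Fz: "F \<subseteq> zigzags r s \<Lambda>"
  proof
    fix z' assume z': "z' \<in> F"
    obtain b where "zz z' b = Some (m t b)" using Fw(1)[OF z'(1)] by auto
    then show "z' \<in> zigzags r s \<Lambda>" using good_zig Fw(2,3)[OF z'(1)] by blast
  qed
  have eq: "{b\<in>\<Lambda>. r b = s t \<and> m t b \<in> \<Lambda>} = (\<Union>z\<in>F. zzdom r s m \<Lambda> z)"
  proof
    show "{b\<in>\<Lambda>. r b = s t \<and> m t b \<in> \<Lambda>} \<subseteq> (\<Union>z\<in>F. zzdom r s m \<Lambda> z)"
    proof
      fix b assume "b \<in> {b\<in>\<Lambda>. r b = s t \<and> m t b \<in> \<Lambda>}"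
      then have b: "b \<in> \<Lambda>" "r b = s t" "m t b \<in> \<Lambda>" by auto
      obtain c z where cz: "(c,z) \<in> set L" "zz z (m t b) = Some b" using key[OF b] by auto
      have zZ: "z \<in> Z" using cz b unfolding Z_def by auto
      have "zz (zrev z) b = Some (m t b)" using cz(2) zz_rev Zg[OF zZ] by blast
      then show "b \<in> (\<Union>z\<in>F. zzdom r s m \<Lambda> z)" using zZ unfolding F_def zzdom_def by auto
    qed
  next
    show "(\<Union>z\<in>F. zzdom r s m \<Lambda> z) \<subseteq> {b\<in>\<Lambda>. r b = s t \<and> m t b \<in> \<Lambda>}"
    proof
      fix b assume "b \<in> (\<Union>z\<in>F. zzdom r s m \<Lambda> z)"
      then obtain z' where z': "z' \<in> F" "b \<in> zzdom r s m \<Lambda> z'" by auto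
      have h: "r b = s t" "zz z' b = Some (m t b)" using F1[OF z'(1) z'(2)] by auto
      have bL: "b \<in> \<Lambda>" using zz_dom Fw(3)[OF z'(1)] h(2) by blast
      obtain a0 b0 z0 where z0: "z' = (a0,b0)#z0" using Fw(3)[OF z'(1)] by (metis list.exhaust prod.exhaust)
      have "a0 \<in> Y" using Fw(2)[OF z'(1)] z0 LY by auto
      then have "m t b \<in> \<Lambda>" using zz_out[of a0 b0 z0 b] h(2) z0 by auto
      then show "b \<in> {b\<in>\<Lambda>. r b = s t \<and> m t b \<in> \<Lambda>}" using bL h by auto
    qed
  qed
  show ?thesis using fin Fz F1 eq by blast
qed

abbreviation "CG \<equiv> Cstar_gen \<Lambda> (Wop r m i \<Lambda> ` \<Lambda>)"

lemma tau_in: assumes b: "b \<in> \<Lambda>" shows "pop (tauL b) \<in> CG"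
proof -
  have bY: "b \<in> Y" using b LY by auto
  have W: "Wop r m i \<Lambda> b \<in> CG" using b by (auto intro: Cstar_gen.gen)
  show ?thesis
  proof (rule Cstar_gen.adj[OF W])
    show "\<forall>g\<in>l2 \<Lambda>. pop (tauL b) g \<in> l2 \<Lambda>"
    proof
      fix g assume g: "g \<in> l2 \<Lambda>"
      show "pop (tauL b) g \<in> l2 \<Lambda>"
        by (rule pop_l2(1)[OF _ _ g]) (auto simp: tau_def LY bY split: if_splits intro: lcancel[OF bY])
    qed
    show "\<forall>f\<in>l2 \<Lambda>. \<forall>g\<in>l2 \<Lambda>. l2inner (Wop r m i \<Lambda> b f) g = l2inner f (pop (tauL b) g)"
      unfolding Wop_pop[OF b] by (intro ballI pop_adj) (rule sigma_iff[OF bY])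
  qed
qed

lemma Vz_Cons: "Vz ((a,b)#z) f = Vz z (pop (tauL b) (pop (sigmaL a) f))"
  by (rule ext) (simp add: Vz_def pop_def split: option.split)

lemma Vz_Nil: "Vz [] f = f"
  by (rule ext) (simp add: Vz_def pop_def)

lemma Vz_in: "ok z \<Longrightarrow> z \<noteq> [] \<Longrightarrow> Vz z \<in> CG"
proof (induction z)
  case Nil then show ?case by simp
next
  case (Cons p z)
  obtain a b where p: "p = (a,b)" by fastforce
  have ab: "a \<in> \<Lambda>" "b \<in> \<Lambda>" "ok z" using Cons.prems p by auto
  have Wa: "pop (sigmaL a) \<in> CG" using Wop_pop[OF ab(1)] ab(1) by (metis Cstar_gen.gen image_eqI)
  have T2: "(\<lambda>f. pop (tauL b) (pop (sigmaL a) f)) \<in> CG" by (rule Cstar_gen.mult[OF tau_in[OF ab(2)] Wa])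
  show ?case
  proof (cases "z = []")
    case True
    have "Vz (p#z) = (\<lambda>f. pop (tauL b) (pop (sigmaL a) f))" by (rule ext) (simp add: True p Vz_Cons Vz_Nil)
    then show ?thesis using T2 by simp
  next
    case False
    have "Vz (p#z) = (\<lambda>f. Vz z ((\<lambda>f. pop (tauL b) (pop (sigmaL a) f)) f))" by (rule ext) (simp add: p Vz_Cons)
    then show ?thesis using Cstar_gen.mult[OF Cons.IH[OF ab(3) False] T2] by simp
  qed
qed

definition Qop :: "'a \<Rightarrow> 'a set \<Rightarrow> 'a op" where
  "Qop t C f = Wop r m i \<Lambda> t (\<lambda>x. if x \<in> C then f x else 0)"

lemma bwd:
  assumes t: "t \<in> Y" and fin: "finite F" and Fz: "F \<subseteq> zigzags r s \<Lambda>"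
    and F1: "\<forall>z\<in>F. \<forall>b\<in>zzdom r s m \<Lambda> z. r b = s t \<and> zz z b = Some (m t b)"
    and eq: "{b\<in>\<Lambda>. r b = s t \<and> m t b \<in> \<Lambda>} = (\<Union>z\<in>F. zzdom r s m \<Lambda> z)"
  shows "Wop r m i \<Lambda> t \<in> CG"
proof -
  have zF: "ok z \<and> z \<noteq> []" if "z \<in> F" for z using that Fz zig_ok by blast
  have A: "Vz (zrev z) f g = Qop t (zzdom r s m \<Lambda> z) f g" if z: "z \<in> F" for z f g
  proof (cases "zz (zrev z) g")
    case (Some x)
    have okz: "ok z" "z \<noteq> []" using zF[OF z] by auto
    have zx: "zz z x = Some g" using Some zz_rev[OF okz(1)] by blast
    then have xA: "x \<in> zzdom r s m \<Lambda> z" by (simp add: zzdom_def)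
    have h: "r x = s t" "g = m t x" using F1 z xA zx by auto
    have xL: "x \<in> \<Lambda>" using zz_dom okz(2) zx by blast
    obtain a0 b0 z0 where z0: "z = (a0,b0)#z0" using okz(2) by (metis list.exhaust prod.exhaust)
    have gL: "g \<in> \<Lambda>" using zz_out[of a0 b0 z0 x g] zx z0 okz LY by auto
    have xY: "x \<in> Y" using xL LY by auto
    have "r g = r t" "m (i t) g = x" using h gm(2)[OF t xY] canc1[OF t xY] by auto
    then show ?thesis using Some xA xL gL by (simp add: Vz_def pop_def Qop_def Wop_def)
  next
    case None
    have okz: "ok z" "z \<noteq> []" using zF[OF z] by auto
    have "\<not> (g \<in> \<Lambda> \<and> r g = r t \<and> m (i t) g \<in> \<Lambda> \<and> m (i t) g \<in> zzdom r s m \<Lambda> z)"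
    proof
      assume c: "g \<in> \<Lambda> \<and> r g = r t \<and> m (i t) g \<in> \<Lambda> \<and> m (i t) g \<in> zzdom r s m \<Lambda> z"
      have "zz z (m (i t) g) = Some (m t (m (i t) g))" using F1 z c by blast
      also have "m t (m (i t) g) = g" using canc2[OF t] c LY by auto
      finally have "zz (zrev z) g = Some (m (i t) g)" using zz_rev[OF okz(1)] by blast
      then show False using None by simp
    qed
    then show ?thesis using None by (auto simp: Vz_def pop_def Qop_def Wop_def)
  qed
  have B: "Vz z (Vz (zrev z) f) x = (if x \<in> zzdom r s m \<Lambda> z then f x else 0)" if z: "z \<in> F" for z f x
  proof -
    have okz: "ok z" using zF[OF z] by auto
    show ?thesis
    proof (cases "zz z x")
      case None then show ?thesis by (simp add: Vz_def pop_def zzdom_def)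
    next
      case (Some y)
      then have "zz (zrev z) y = Some x" using zz_rev[OF okz] by blast
      then show ?thesis using Some by (simp add: Vz_def pop_def zzdom_def)
    qed
  qed
  have Q: "Qop t (\<Union>z\<in>F'. zzdom r s m \<Lambda> z) \<in> CG" if "finite F'" "F' \<subseteq> F" for F'
    using that
  proof (induction F' rule: finite_induct)
    case empty
    have rt: "r t \<in> \<Lambda>" using Lr[OF t] .
    have W: "Wop r m i \<Lambda> (r t) \<in> CG" using rt by (auto intro: Cstar_gen.gen)
    have "(\<lambda>f x. 0 * Wop r m i \<Lambda> (r t) f x) = Qop t (\<Union>z\<in>{}. zzdom r s m \<Lambda> z)"
      by (intro ext) (simp add: Qop_def Wop_def)
    then show ?case using Cstar_gen.scale[OF W, of 0] by simp
  next
    case (insert z F')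
    have z: "z \<in> F" and F': "F' \<subseteq> F" using insert.prems by auto
    have okz: "ok z" "z \<noteq> []" using zF[OF z] by auto
    define C where "C = (\<Union>z\<in>F'. zzdom r s m \<Lambda> z)"
    define Az where "Az = zzdom r s m \<Lambda> z"
    have QC: "Qop t C \<in> CG" using insert.IH[OF F'] C_def by simp
    have V1: "Vz (zrev z) \<in> CG" using Vz_in okz by simp
    have V2: "Vz z \<in> CG" using Vz_in okz by simp
    have P: "(\<lambda>f. Vz z (Vz (zrev z) f)) \<in> CG" by (rule Cstar_gen.mult[OF V2 V1])
    have QP: "(\<lambda>f. Qop t C (Vz z (Vz (zrev z) f))) \<in> CG" using Cstar_gen.mult[OF QC P] by simp
    have R: "(\<lambda>f x. Vz (zrev z) f x + ((\<lambda>f x. Qop t C f x + (\<lambda>f x. (-1) * Qop t C (Vz z (Vz (zrev z) f)) x) f x) f x)) \<in> CG"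
      by (intro Cstar_gen.add V1 QC Cstar_gen.scale QP)
    have e: "(\<lambda>f x. Vz (zrev z) f x + ((\<lambda>f x. Qop t C f x + (\<lambda>f x. (-1) * Qop t C (Vz z (Vz (zrev z) f)) x) f x) f x))
        = Qop t (\<Union>z\<in>insert z F'. zzdom r s m \<Lambda> z)"
    proof (intro ext)
      fix f g
      have B': "(\<lambda>x. if x \<in> C then Vz z (Vz (zrev z) f) x else 0) = (\<lambda>x. if x \<in> C then (if x \<in> Az then f x else 0) else 0)"
        using B[OF z] Az_def by auto
      show "Vz (zrev z) f g + (Qop t C f g + (-1) * Qop t C (Vz z (Vz (zrev z) f)) g) = Qop t (\<Union>z\<in>insert z F'. zzdom r s m \<Lambda> z) f g"
        unfolding A[OF z] Qop_def B' using Az_def C_def by (simp add: Wop_def)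
    qed
    show ?case using R e by simp
  qed
  have "Wop r m i \<Lambda> t = Qop t (\<Union>z\<in>F. zzdom r s m \<Lambda> z)"
  proof (intro ext)
    fix f g
    show "Wop r m i \<Lambda> t f g = Qop t (\<Union>z\<in>F. zzdom r s m \<Lambda> z) f g"
    proof (cases "g \<in> \<Lambda> \<and> r g = r t \<and> m (i t) g \<in> \<Lambda>")
      case True
      have gY0: "g \<in> Y" using True LY by auto
      have "m t (m (i t) g) = g" using canc2[OF t gY0] True by simp
      moreover have "r (m (i t) g) = s t" using gm(2)[OF gY(3)[OF t] gY0] gid[OF t] True by simp
      ultimately have "m (i t) g \<in> {b\<in>\<Lambda>. r b = s t \<and> m t b \<in> \<Lambda>}" using True by simp
      then show ?thesis using True unfolding eq by (simp add: Qop_def Wop_def)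
    next
      case False then show ?thesis by (auto simp: Qop_def Wop_def)
    qed
  qed
  then show ?thesis using Q[OF fin order_refl] by simp
qed

end

theorem mainTheorem18:
  fixes Y \<Lambda> :: "'a set" and r s i :: "'a \<Rightarrow> 'a" and m :: "'a \<Rightarrow> 'a \<Rightarrow> 'a" and t :: 'a
  assumes "groupoid Y r s m i"
    and "subcategory Y r s m \<Lambda>"
    and "r ` Y \<subseteq> \<Lambda>"
    and "t \<in> Y"
  shows "Wop r m i \<Lambda> t \<in> W0 r m i \<Lambda> \<longleftrightarrow>
    (\<exists>F. finite F \<and> F \<subseteq> zigzags r s \<Lambda> \<and>
       (\<forall>z\<in>F. \<forall>b\<in>zzdom r s m \<Lambda> z. r b = s t \<and> zzmap r s m \<Lambda> z b = Some (m t b)) \<and>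
       {b\<in>\<Lambda>. r b = s t \<and> m t b \<in> \<Lambda>} = (\<Union>z\<in>F. zzdom r s m \<Lambda> z))"
proof -
  interpret gctx Y \<Lambda> r s i m using assms(1-3) by unfold_locales
  show ?thesis
  proof
    assume "Wop r m i \<Lambda> t \<in> W0 r m i \<Lambda>"
    then have "Inv (Wop r m i \<Lambda> t)" unfolding W0_def by (rule Cstar_Inv)
    then show "\<exists>F. finite F \<and> F \<subseteq> zigzags r s \<Lambda> \<and>
       (\<forall>z\<in>F. \<forall>b\<in>zzdom r s m \<Lambda> z. r b = s t \<and> zzmap r s m \<Lambda> z b = Some (m t b)) \<and>
       {b\<in>\<Lambda>. r b = s t \<and> m t b \<in> \<Lambda>} = (\<Union>z\<in>F. zzdom r s m \<Lambda> z)"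
      by (rule fwd[OF assms(4)])
  next
    assume "\<exists>F. finite F \<and> F \<subseteq> zigzags r s \<Lambda> \<and>
       (\<forall>z\<in>F. \<forall>b\<in>zzdom r s m \<Lambda> z. r b = s t \<and> zzmap r s m \<Lambda> z b = Some (m t b)) \<and>
       {b\<in>\<Lambda>. r b = s t \<and> m t b \<in> \<Lambda>} = (\<Union>z\<in>F. zzdom r s m \<Lambda> z)"
    then obtain F where "finite F" "F \<subseteq> zigzags r s \<Lambda>"
      "\<forall>z\<in>F. \<forall>b\<in>zzdom r s m \<Lambda> z. r b = s t \<and> zzmap r s m \<Lambda> z b = Some (m t b)"
      "{b\<in>\<Lambda>. r b = s t \<and> m t b \<in> \<Lambda>} = (\<Union>z\<in>F. zzdom r s m \<Lambda> z)" by blast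
    then show "Wop r m i \<Lambda> t \<in> W0 r m i \<Lambda>" unfolding W0_def using bwd[OF assms(4)] by blast
  qed
qed


end
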